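(* Let $\mathcal{X}$ be a fuzzy random variable with values in $\mathcal{F}_c(\mathbb{R})$ such that $\mathrm{E}[\|\mathcal{X}_0\|]<\infty$. Then $\mathrm{Med}_1(\mathcal{X})=\mathrm{Med}_s(\mathcal{X})$; that is, a fuzzy set $U\in\mathcal{F}_c(\mathbb{R})$ minimizes $\mathrm{E}[\rho_1(U,\mathcal{X})]$ over $\mathcal{F}_c(\mathbb{R})$ if and only if $s_U(u,\alpha)$ is a median of the real random variable $s_{\mathcal{X}}(u,\alpha)$ for every $u\in\{-1,1\}$ and every $\alpha\in[0,1]$.
   Context: $\mathcal{F}_c(\mathbb{R})$ is the set of functions $A:\mathbb{R}\to[0,1]$ whose $\alpha$-levels $A_\alpha=\{x:A(x)\ge\alpha\}$ ($\alpha\in(0,1]$) and $A_0=\overline{\{x:A(x)>0\}}$ are non-empty compact intervals. Support function: $s_A(u,\alpha)=\sup\{uv:v\in A_\alpha\}$, $u\in\{-1,1\}$, $\alpha\in[0,1]$. A fuzzy random variable on $(\Omega,\mathcal{A},\mathbb{P})$ is a map $\mathcal{X}:\Omega\to\mathcal{F}_c(\mathbb{R})$ with each $\omega\mapsto\mathcal{X}(\omega)_\alpha$ a random compact set; $s_{\mathcal{X}}(u,\alpha)(\omega)=s_{\mathcal{X}(\omega)}(u,\alpha)$ is then a real random variable; $\|\mathcal{X}_0\|=\sup\{|x|:x\in\mathcal{X}(\cdot)_0\}$. $\rho_1(A,B)=\int_{\{-1,1\}}\int_0^1|s_A(u,\alpha)-s_B(u,\alpha)|\,d\alpha\,d\mathcal{V}(u)$,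 $\mathcal{V}$ uniform on $\{-1,1\}$. $\mathrm{Med}_1(\mathcal{X})=\arg\min_{U\in\mathcal{F}_c(\mathbb{R})}\mathrm{E}[\rho_1(U,\mathcal{X})]$. For a real random variable $X$, $\mathrm{Med}(X)$ is the set of all its medians. $\mathrm{Med}_s(\mathcal{X})$ (support medians) is the set of $A\in\mathcal{F}_c(\mathbb{R})$ with $s_A(u,\alpha)\in\mathrm{Med}(s_{\mathcal{X}}(u,\alpha))$ for all $u\in\{-1,1\}$, $\alpha\in[0,1]$. *)

theory Defs
  imports "HOL-Probability.Probability"
begin

text \<open>Fuzzy sets on the reals are membership functions real \<Rightarrow> real.\<close>

definition is_compact_interval :: "real set \<Rightarrow> bool" where
  "is_compact_interval S \<longleftrightarrow> (\<exists>a b. a \<le> b \<and> S = {a..b})"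

definition flevel :: "(real \<Rightarrow> real) \<Rightarrow> real \<Rightarrow> real set" where
  "flevel A \<alpha> = (if \<alpha> = 0 then closure {x. A x > 0} else {x. \<alpha> \<le> A x})"

definition Fc :: "(real \<Rightarrow> real) set" where
  "Fc = {A. (\<forall>x. 0 \<le> A x \<and> A x \<le> 1) \<and> (\<forall>\<alpha>\<in>{0..1}. is_compact_interval (flevel A \<alpha>))}"

definition supp_fun :: "(real \<Rightarrow> real) \<Rightarrow> real \<Rightarrow> real \<Rightarrow> real" where
  "supp_fun A u \<alpha> = Sup ((\<lambda>v. u * v) ` flevel A \<alpha>)"

definition random_compact_set :: "'a measure \<Rightarrow> ('a \<Rightarrow> real set) \<Rightarrow> bool" where
  "random_compact_set M K \<longleftrightarrow>
     (\<forall>\<omega>\<in>space M. compact (K \<omega>) \<and> K \<omega> \<noteq> {}) \<and>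
     (\<forall>C. compact C \<longrightarrow> {\<omega>\<in>space M. K \<omega> \<inter> C \<noteq> {}} \<in> sets M)"

definition fuzzy_random_variable :: "'a measure \<Rightarrow> ('a \<Rightarrow> real \<Rightarrow> real) \<Rightarrow> bool" where
  "fuzzy_random_variable M X \<longleftrightarrow>
     (\<forall>\<omega>\<in>space M. X \<omega> \<in> Fc) \<and>
     (\<forall>\<alpha>\<in>{0..1}. random_compact_set M (\<lambda>\<omega>. flevel (X \<omega>) \<alpha>))"

definition norm0 :: "(real \<Rightarrow> real) \<Rightarrow> real" where
  "norm0 A = Sup (abs ` flevel A 0)"

text \<open>rho_1 metric, V uniform on {-1,1}.\<close>
definition rho1 :: "(real \<Rightarrow> real) \<Rightarrow> (real \<Rightarrow> real) \<Rightarrow> real" where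
  "rho1 A B = (\<Sum>u\<in>{-1, 1::real}. (1/2) *
      (LBINT \<alpha>=0..1. \<bar>supp_fun A u \<alpha> - supp_fun B u \<alpha>\<bar>))"

definition Med1 :: "'a measure \<Rightarrow> ('a \<Rightarrow> real \<Rightarrow> real) \<Rightarrow> (real \<Rightarrow> real) set" where
  "Med1 M X = {U \<in> Fc. \<forall>V\<in>Fc.
      (\<integral>\<^sup>+\<omega>. ennreal (rho1 U (X \<omega>)) \<partial>M) \<le> (\<integral>\<^sup>+\<omega>. ennreal (rho1 V (X \<omega>)) \<partial>M)}"

definition Med :: "'a measure \<Rightarrow> ('a \<Rightarrow> real) \<Rightarrow> real set" where
  "Med M Y = {m. measure M {\<omega>\<in>space M. Y \<omega> \<le> m} \<ge> 1/2 \<and>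
                 measure M {\<omega>\<in>space M. Y \<omega> \<ge> m} \<ge> 1/2}"

definition Meds :: "'a measure \<Rightarrow> ('a \<Rightarrow> real \<Rightarrow> real) \<Rightarrow> (real \<Rightarrow> real) set" where
  "Meds M X = {A \<in> Fc. \<forall>u\<in>{-1, 1}. \<forall>\<alpha>\<in>{0..1}.
      supp_fun A u \<alpha> \<in> Med M (\<lambda>\<omega>. supp_fun (X \<omega>) u \<alpha>)}"

end

theory Submission
  imports Defs
begin

definition lo :: "(real \<Rightarrow> real) \<Rightarrow> real \<Rightarrow> real" where "lo A \<alpha> = Inf (flevel A \<alpha>)"
definition up :: "(real \<Rightarrow> real) \<Rightarrow> real \<Rightarrow> real" where "up A \<alpha> = Sup (flevel A \<alpha>)"

lemma level_eq:
  assumes "A \<in> Fc" "\<alpha> \<in> {0..1}"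
  shows "flevel A \<alpha> = {lo A \<alpha>..up A \<alpha>}" "lo A \<alpha> \<le> up A \<alpha>"
proof -
  obtain a b where ab: "a \<le> b" "flevel A \<alpha> = {a..b}"
    using assms unfolding Fc_def is_compact_interval_def by blast
  then show "flevel A \<alpha> = {lo A \<alpha>..up A \<alpha>}" "lo A \<alpha> \<le> up A \<alpha>"
    by (auto simp: lo_def up_def)
qed

lemma supp_pos: "supp_fun A 1 \<alpha> = up A \<alpha>"
  by (simp add: supp_fun_def up_def)

lemma supp_neg:
  assumes "A \<in> Fc" "\<alpha> \<in> {0..1}"
  shows "supp_fun A (-1) \<alpha> = - lo A \<alpha>"
proof -
  have "(\<lambda>v. (-1) * v) ` flevel A \<alpha> = {- up A \<alpha>.. - lo A \<alpha>}"
    using level_eq[OF assms] by (simp add: image_uminus_atLeastAtMost)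
  then show ?thesis using level_eq(2)[OF assms] by (simp add: supp_fun_def)
qed

lemma level_mono:
  assumes "0 \<le> \<alpha>" "\<alpha> \<le> \<beta>"
  shows "flevel A \<beta> \<subseteq> flevel A \<alpha>"
proof (cases "\<alpha> = 0")
  case True
  show ?thesis
  proof (cases "\<beta> = 0")
    case False
    then have "flevel A \<beta> \<subseteq> {x. A x > 0}" using assms True by (auto simp: flevel_def)
    also have "\<dots> \<subseteq> closure {x. A x > 0}" by (rule closure_subset)
    finally show ?thesis using True by (simp add: flevel_def)
  qed (use True in simp)
next
  case False
  then show ?thesis using assms by (auto simp: flevel_def)
qed

lemma lo_up_mono:
  assumes "A \<in> Fc" "0 \<le> \<alpha>" "\<alpha> \<le> \<beta>" "\<beta> \<le> 1"
  shows "lo A \<alpha> \<le> lo A \<beta>" "up A \<beta> \<le> up A \<alpha>"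
proof -
  have a: "\<alpha> \<in> {0..1}" and b: "\<beta> \<in> {0..1}" using assms by auto
  have "{lo A \<beta>..up A \<beta>} \<subseteq> {lo A \<alpha>..up A \<alpha>}"
    using level_mono[OF assms(2,3), of A] level_eq(1)[OF assms(1) a] level_eq(1)[OF assms(1) b] by simp
  then show "lo A \<alpha> \<le> lo A \<beta>" "up A \<beta> \<le> up A \<alpha>"
    using level_eq(2)[OF assms(1) b] by auto
qed

lemma level_left:
  assumes "A \<in> Fc" "0 < \<alpha>" "\<alpha> \<le> 1" "\<And>\<beta>. 0 < \<beta> \<Longrightarrow> \<beta> < \<alpha> \<Longrightarrow> x \<in> flevel A \<beta>"
  shows "x \<in> flevel A \<alpha>"
proof -
  have "\<alpha> \<le> A x"
    by (rule dense_le_bounded[OF assms(2)]) (use assms(4) in \<open>auto simp: flevel_def\<close>)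
  then show ?thesis using assms by (simp add: flevel_def)
qed

lemma up_left:
  assumes "A \<in> Fc" "0 < \<alpha>" "\<alpha> \<le> 1" "\<And>\<beta>. 0 < \<beta> \<Longrightarrow> \<beta> < \<alpha> \<Longrightarrow> c \<le> up A \<beta>"
  shows "c \<le> up A \<alpha>"
proof -
  define p where "p = max c (lo A \<alpha>)"
  have "p \<in> flevel A \<alpha>"
  proof (rule level_left[OF assms(1-3)])
    fix \<beta> assume b: "0 < \<beta>" "\<beta> < \<alpha>"
    have "lo A \<beta> \<le> lo A \<alpha>" "up A \<alpha> \<le> up A \<beta>" using lo_up_mono[OF assms(1), of \<beta> \<alpha>] b assms by auto
    moreover have "lo A \<alpha> \<le> up A \<alpha>" using level_eq(2)[OF assms(1)] assms by auto
    ultimately show "p \<in> flevel A \<beta>" using level_eq(1)[OF assms(1), of \<beta>] b assms(3) assms(4)[OF b]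
      by (auto simp: p_def)
  qed
  then show ?thesis using level_eq(1)[OF assms(1), of \<alpha>] assms by (auto simp: p_def)
qed

lemma lo_left:
  assumes "A \<in> Fc" "0 < \<alpha>" "\<alpha> \<le> 1" "\<And>\<beta>. 0 < \<beta> \<Longrightarrow> \<beta> < \<alpha> \<Longrightarrow> lo A \<beta> \<le> c"
  shows "lo A \<alpha> \<le> c"
proof -
  define p where "p = min c (up A \<alpha>)"
  have "p \<in> flevel A \<alpha>"
  proof (rule level_left[OF assms(1-3)])
    fix \<beta> assume b: "0 < \<beta>" "\<beta> < \<alpha>"
    have "lo A \<beta> \<le> lo A \<alpha>" "up A \<alpha> \<le> up A \<beta>" using lo_up_mono[OF assms(1), of \<beta> \<alpha>] b assms by auto
    moreover have "lo A \<alpha> \<le> up A \<alpha>" using level_eq(2)[OF assms(1)] assms by auto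
    ultimately show "p \<in> flevel A \<beta>" using level_eq(1)[OF assms(1), of \<beta>] b assms(3) assms(4)[OF b]
      by (auto simp: p_def)
  qed
  then show ?thesis using level_eq(1)[OF assms(1), of \<alpha>] assms by (auto simp: p_def)
qed

lemma u_cases: "(u::real) \<in> {-1, 1} \<Longrightarrow> (u = 1 \<Longrightarrow> P) \<Longrightarrow> (u = -1 \<Longrightarrow> P) \<Longrightarrow> P"
  by auto

lemma supp_mono:
  assumes "A \<in> Fc" "u \<in> {-1,1}" "0 \<le> \<alpha>" "\<alpha> \<le> \<beta>" "\<beta> \<le> 1"
  shows "supp_fun A u \<beta> \<le> supp_fun A u \<alpha>"
  using assms(2)
proof (rule u_cases)
  assume "u = 1" then show ?thesis using lo_up_mono[OF assms(1,3,4,5)] by (simp add: supp_pos)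
next
  assume "u = -1" then show ?thesis using lo_up_mono[OF assms(1,3,4,5)] assms
    by (simp add: supp_neg)
qed

lemma supp_left:
  assumes "A \<in> Fc" "u \<in> {-1,1}" "0 < \<alpha>" "\<alpha> \<le> 1"
    "\<And>\<beta>. 0 < \<beta> \<Longrightarrow> \<beta> < \<alpha> \<Longrightarrow> c \<le> supp_fun A u \<beta>"
  shows "c \<le> supp_fun A u \<alpha>"
  using assms(2)
proof (rule u_cases)
  assume "u = 1" then show ?thesis using up_left[OF assms(1,3,4), of c] assms(5) by (simp add: supp_pos)
next
  assume u: "u = -1"
  have "lo A \<alpha> \<le> - c"
  proof (rule lo_left[OF assms(1,3,4)])
    fix \<beta> assume b: "0 < \<beta>" "\<beta> < \<alpha>"
    have "c \<le> - lo A \<beta>" using assms(5)[OF b] u supp_neg[OF assms(1), of \<beta>] b assms(4) by simp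
    then show "lo A \<beta> \<le> - c" by simp
  qed
  then show ?thesis using u assms by (simp add: supp_neg)
qed

lemma supp_zero:
  assumes "A \<in> Fc" "u \<in> {-1,1}" "c < supp_fun A u 0"
  shows "\<exists>\<beta>\<in>{0<..1}. c < supp_fun A u \<beta>"
proof -
  have "\<exists>x. 0 < A x \<and> c < u * x"
  proof (rule ccontr)
    assume "\<not> ?thesis"
    then have "{x. 0 < A x} \<subseteq> {x. u * x \<le> c}" by force
    moreover have "closed {x. u * x \<le> c}" by (intro closed_Collect_le continuous_intros)
    ultimately have "flevel A 0 \<subseteq> {x. u * x \<le> c}" unfolding flevel_def by (simp add: closure_minimal)
    then have "\<forall>v\<in>(\<lambda>v. u * v) ` flevel A 0. v \<le> c" by auto
    moreover have "flevel A 0 \<noteq> {}" using level_eq[OF assms(1), of 0] by auto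
    ultimately have "supp_fun A u 0 \<le> c" unfolding supp_fun_def by (intro cSup_least) auto
    then show False using assms by simp
  qed
  then obtain x where x: "0 < A x" "c < u * x" by blast
  have A1: "A x \<le> 1" using assms(1) by (auto simp: Fc_def)
  have xin: "x \<in> flevel A (A x)" using x by (simp add: flevel_def)
  have "flevel A (A x) = {lo A (A x)..up A (A x)}" using level_eq(1)[OF assms(1)] x A1 by auto
  then have "u * x \<le> supp_fun A u (A x)"
    using xin unfolding supp_fun_def by (intro cSup_upper bdd_aboveI2[where M="max (u * lo A (A x)) (u * up A (A x))"])
      (use assms(2) in auto)
  then show ?thesis using x A1 by force
qed

lemma supp_bound:
  assumes "A \<in> Fc" "u \<in> {-1,1}" "\<alpha> \<in> {0..1}"
  shows "\<bar>supp_fun A u \<alpha>\<bar> \<le> norm0 A"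
proof -
  have e0: "flevel A 0 = {lo A 0..up A 0}" "lo A 0 \<le> up A 0" using level_eq[OF assms(1), of 0] by auto
  have ea: "flevel A \<alpha> = {lo A \<alpha>..up A \<alpha>}" "lo A \<alpha> \<le> up A \<alpha>" using level_eq[OF assms(1,3)] by auto
  have sub: "flevel A \<alpha> \<subseteq> flevel A 0" using level_mono[of 0 \<alpha>] assms(3) by auto
  have bdd: "bdd_above (abs ` flevel A 0)"
    using e0 by (intro bdd_aboveI2[where M="max \<bar>lo A 0\<bar> \<bar>up A 0\<bar>"]) auto
  have "\<bar>up A \<alpha>\<bar> \<le> norm0 A" "\<bar>lo A \<alpha>\<bar> \<le> norm0 A"
    unfolding norm0_def using sub ea by (auto intro!: cSup_upper bdd)
  then show ?thesis using assms(2) supp_neg[OF assms(1,3)] by (auto simp: supp_pos)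
qed


lemma Sup_compact_ge_iff:
  fixes K :: "real set"
  assumes "compact K" "K \<noteq> {}"
  shows "a \<le> Sup ((\<lambda>v. u * v) ` K) \<longleftrightarrow> (\<exists>v\<in>K. a \<le> u * v)"
proof -
  have c: "compact ((\<lambda>v. u * v) ` K)"
    by (intro compact_continuous_image continuous_intros assms)
  obtain s where s: "s \<in> (\<lambda>v. u * v) ` K" "\<forall>t\<in>(\<lambda>v. u * v) ` K. t \<le> s"
    using compact_attains_sup[OF c] assms(2) by blast
  have "Sup ((\<lambda>v. u * v) ` K) = s"
    using s by (intro cSup_eq_maximum) auto
  then show ?thesis using s by auto
qed

lemma supp_meas:
  assumes "fuzzy_random_variable M X" "\<alpha> \<in> {0..1}"
  shows "(\<lambda>\<omega>. supp_fun (X \<omega>) u \<alpha>) \<in> borel_measurable M"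
proof -
  have rc: "random_compact_set M (\<lambda>\<omega>. flevel (X \<omega>) \<alpha>)"
    using assms unfolding fuzzy_random_variable_def by blast
  show ?thesis unfolding borel_measurable_iff_ge
  proof
    fix a
    define C where "C n = {v. a \<le> u * v} \<inter> cball 0 (real n)" for n :: nat
    have cC: "compact (C n)" for n
      unfolding C_def by (subst Int_commute, intro compact_Int_closed compact_cball closed_Collect_le continuous_intros)
    have "{w \<in> space M. a \<le> supp_fun (X w) u \<alpha>} = (\<Union>n. {w \<in> space M. flevel (X w) \<alpha> \<inter> C n \<noteq> {}})"
    proof (intro set_eqI iffI)
      fix w assume "w \<in> {w \<in> space M. a \<le> supp_fun (X w) u \<alpha>}"
      then have w: "w \<in> space M" "a \<le> supp_fun (X w) u \<alpha>" by auto
      have "compact (flevel (X w) \<alpha>)" "flevel (X w) \<alpha> \<noteq> {}" using rc w(1) unfolding random_compact_set_def by auto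
      then obtain v where v: "v \<in> flevel (X w) \<alpha>" "a \<le> u * v"
        using w(2) Sup_compact_ge_iff unfolding supp_fun_def by blast
      obtain n :: nat where "norm v \<le> real n" using real_arch_simple by blast
      then have "v \<in> C n" using v by (auto simp: C_def)
      then show "w \<in> (\<Union>n. {w \<in> space M. flevel (X w) \<alpha> \<inter> C n \<noteq> {}})" using v w by blast
    next
      fix w assume "w \<in> (\<Union>n. {w \<in> space M. flevel (X w) \<alpha> \<inter> C n \<noteq> {}})"
      then obtain n v where w: "w \<in> space M" "v \<in> flevel (X w) \<alpha>" "v \<in> C n" by blast
      have "compact (flevel (X w) \<alpha>)" "flevel (X w) \<alpha> \<noteq> {}" using rc w(1) unfolding random_compact_set_def by auto
      then have "a \<le> supp_fun (X w) u \<alpha>"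
        using w Sup_compact_ge_iff unfolding supp_fun_def by (auto simp: C_def)
      then show "w \<in> {w \<in> space M. a \<le> supp_fun (X w) u \<alpha>}" using w by blast
    qed
    also have "\<dots> \<in> sets M"
      using rc cC unfolding random_compact_set_def by blast
    finally show "{w \<in> space M. a \<le> supp_fun (X w) u \<alpha>} \<in> sets M" .
  qed
qed

lemma supp_integrable:
  assumes "fuzzy_random_variable M X" "(\<integral>\<^sup>+\<omega>. ennreal (norm0 (X \<omega>)) \<partial>M) < \<infinity>"
    "\<alpha> \<in> {0..1}" "u \<in> {-1,1}"
  shows "integrable M (\<lambda>\<omega>. supp_fun (X \<omega>) u \<alpha>)"
proof (rule integrableI_bounded)
  show "(\<lambda>\<omega>. supp_fun (X \<omega>) u \<alpha>) \<in> borel_measurable M" using supp_meas assms by blast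
  have "(\<integral>\<^sup>+\<omega>. ennreal (norm (supp_fun (X \<omega>) u \<alpha>)) \<partial>M) \<le> (\<integral>\<^sup>+\<omega>. ennreal (norm0 (X \<omega>)) \<partial>M)"
    using assms(1) supp_bound assms(3,4) by (intro nn_integral_mono ennreal_leI) (auto simp: fuzzy_random_variable_def)
  then show "(\<integral>\<^sup>+\<omega>. ennreal (norm (supp_fun (X \<omega>) u \<alpha>)) \<partial>M) < \<infinity>" using assms(2) by order
qed


definition hi :: "'a measure \<Rightarrow> ('a \<Rightarrow> real) \<Rightarrow> real" where
  "hi M Y = Sup {c. 1/2 \<le> measure M {\<omega>\<in>space M. c \<le> Y \<omega>}}"

context prob_space
begin

lemma dec_half:
  assumes "\<And>n. A n \<in> events" "decseq A" "\<And>n. t \<le> prob (A n)"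
  shows "t \<le> prob (\<Inter>n. A n)"
proof -
  have "(\<lambda>n. prob (A n)) \<longlonglongrightarrow> prob (\<Inter>n. A n)"
    using assms by (intro finite_Lim_measure_decseq) auto
  then show ?thesis by (rule LIMSEQ_le_const) (use assms(3) in auto)
qed

lemma dec_lt:
  assumes "\<And>n. A n \<in> events" "decseq A" "prob (\<Inter>n. A n) < t"
  shows "\<exists>n. prob (A n) < t"
proof (rule ccontr)
  assume "\<not> ?thesis"
  then have "t \<le> prob (\<Inter>n. A n)" using dec_half[OF assms(1,2), of t] by (meson not_le)
  then show False using assms(3) by simp
qed

lemma int_ind_aff: "S \<in> events \<Longrightarrow> integrable M (\<lambda>\<omega>. (c::real) * (2 * indicator S \<omega> - 1::real))"
proof -
  assume S: "S \<in> events"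
  have i: "integrable M (\<lambda>\<omega>. indicator S \<omega> :: real)" by (intro integrable_real_indicator S) (simp add: less_top[symmetric])
  have "integrable M (\<lambda>\<omega>. 2 * indicator S \<omega> - 1 :: real)"
    by (rule Bochner_Integration.integrable_diff[OF integrable_mult_right[OF i]]) simp
  then show ?thesis by (rule integrable_mult_right)
qed
lemma integral_ind_aff: "S \<in> events \<Longrightarrow> (\<integral>\<omega>. (c::real) * (2 * indicator S \<omega> - 1::real) \<partial>M) = c * (2 * prob S - 1)"
proof -
  assume S: "S \<in> events"
  have i: "integrable M (\<lambda>\<omega>. indicator S \<omega> :: real)" by (intro integrable_real_indicator S) (simp add: less_top[symmetric])
  have "(\<integral>\<omega>. (2 * indicator S \<omega> - 1::real) \<partial>M) = 2 * prob S - 1"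
    using S i by (simp add: integral_diff sets.Int_space_eq2 prob_space)
  then show ?thesis by simp
qed

lemma Med_uminus:
  assumes "m \<in> Med M Y"
  shows "- m \<in> Med M (\<lambda>\<omega>. - Y \<omega>)"
proof -
  have "{\<omega>\<in>space M. - Y \<omega> \<le> - m} = {\<omega>\<in>space M. m \<le> Y \<omega>}"
       "{\<omega>\<in>space M. - m \<le> - Y \<omega>} = {\<omega>\<in>space M. Y \<omega> \<le> m}" by auto
  then show ?thesis using assms by (simp add: Med_def)
qed

lemma med_opt_aux:
  fixes Y :: "'a \<Rightarrow> real"
  assumes Y: "integrable M Y" and m: "1/2 \<le> prob {\<omega>\<in>space M. Y \<omega> \<le> m}" and cm: "m \<le> c"
  shows "(\<integral>\<omega>. \<bar>m - Y \<omega>\<bar> \<partial>M) \<le> (\<integral>\<omega>. \<bar>c - Y \<omega>\<bar> \<partial>M)"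
proof -
  have [measurable]: "Y \<in> borel_measurable M" using Y by auto
  define S where "S = {\<omega>\<in>space M. Y \<omega> \<le> m}"
  have S[measurable]: "S \<in> events" unfolding S_def by measurable
  have int1: "integrable M (\<lambda>\<omega>. \<bar>m - Y \<omega>\<bar>)" "integrable M (\<lambda>\<omega>. \<bar>c - Y \<omega>\<bar>)"
    using Y by auto
  have int2: "integrable M (\<lambda>\<omega>. (c - m) * (2 * indicator S \<omega> - 1))"
    using S by (rule int_ind_aff)
  have "(\<integral>\<omega>. \<bar>m - Y \<omega>\<bar> + (c - m) * (2 * indicator S \<omega> - 1) \<partial>M) \<le> (\<integral>\<omega>. \<bar>c - Y \<omega>\<bar> \<partial>M)"
  proof (intro integral_mono Bochner_Integration.integrable_add int1 int2)
    fix \<omega> assume "\<omega> \<in> space M"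
    then have ind: "indicator S \<omega> = (if Y \<omega> \<le> m then 1 else (0::real))"
      by (simp add: S_def indicator_def)
    show "\<bar>m - Y \<omega>\<bar> + (c - m) * (2 * indicator S \<omega> - 1) \<le> \<bar>c - Y \<omega>\<bar>"
      using cm unfolding ind by (simp add: abs_real_def)
  qed
  moreover have "(\<integral>\<omega>. \<bar>m - Y \<omega>\<bar> + (c - m) * (2 * indicator S \<omega> - 1) \<partial>M)
      = (\<integral>\<omega>. \<bar>m - Y \<omega>\<bar> \<partial>M) + (c - m) * (2 * prob S - 1)"
    by (subst Bochner_Integration.integral_add[OF int1(1) int2]) (simp only: integral_ind_aff[OF S])
  moreover have "0 \<le> (c - m) * (2 * prob S - 1)" using cm m by (simp add: S_def)
  ultimately show ?thesis by linarith
qed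

lemma med_opt:
  fixes Y :: "'a \<Rightarrow> real"
  assumes Y: "integrable M Y" and m: "m \<in> Med M Y"
  shows "(\<integral>\<omega>. \<bar>m - Y \<omega>\<bar> \<partial>M) \<le> (\<integral>\<omega>. \<bar>c - Y \<omega>\<bar> \<partial>M)"
proof (cases "m \<le> c")
  case True
  then show ?thesis using med_opt_aux[OF Y _ True] m by (simp add: Med_def)
next
  case False
  have Y': "integrable M (\<lambda>\<omega>. - Y \<omega>)" using Y by auto
  have "1/2 \<le> prob {\<omega>\<in>space M. - Y \<omega> \<le> - m}" using Med_uminus[OF m] by (simp add: Med_def)
  from med_opt_aux[OF Y' this, of "-c"] False show ?thesis by (simp add: abs_minus_commute)
qed

lemma opt_half_aux:
  fixes Y :: "'a \<Rightarrow> real"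
  assumes Y: "integrable M Y" and opt: "\<And>d. (\<integral>\<omega>. \<bar>c - Y \<omega>\<bar> \<partial>M) \<le> (\<integral>\<omega>. \<bar>d - Y \<omega>\<bar> \<partial>M)"
  shows "1/2 \<le> prob {\<omega>\<in>space M. c \<le> Y \<omega>}"
proof (rule ccontr)
  assume "\<not> ?thesis"
  then have lt: "prob {\<omega>\<in>space M. c \<le> Y \<omega>} < 1/2" by simp
  have [measurable]: "Y \<in> borel_measurable M" using Y by auto
  define A where "A n = {\<omega>\<in>space M. c - 1 / (real n + 1) < Y \<omega>}" for n
  have Aev: "A n \<in> events" for n unfolding A_def by measurable
  have dec: "decseq A"
  proof (rule decseq_SucI)
    fix n
    have le: "1 / (real n + 1) \<le> 1 / (real n + 1) + 1 / ((real n + 1) * (real n + 2))" by simp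
    have "1 / (real (Suc n) + 1) \<le> 1 / (real n + 1)"
      by (intro divide_left_mono) auto
    then show "A (Suc n) \<subseteq> A n" unfolding A_def
    proof (intro subsetI)
      fix \<omega> assume h: "1 / (real (Suc n) + 1) \<le> 1 / (real n + 1)"
        "\<omega> \<in> {\<omega> \<in> space M. c - 1 / (real (Suc n) + 1) < Y \<omega>}"
      then show "\<omega> \<in> {\<omega> \<in> space M. c - 1 / (real n + 1) < Y \<omega>}"
        using h(1) by (simp only: mem_Collect_eq) linarith
    qed
  qed
  have "(\<Inter>n. A n) = {\<omega>\<in>space M. c \<le> Y \<omega>}"
  proof (intro set_eqI iffI)
    fix \<omega> assume w: "\<omega> \<in> (\<Inter>n. A n)"
    then have all: "\<forall>n. c - 1 / (real n + 1) < Y \<omega>" unfolding A_def by blast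
    have "c \<le> Y \<omega>"
    proof (rule field_le_epsilon)
      fix e :: real assume "0 < e"
      then obtain n where "1 / (real n + 1) < e" using nat_approx_posE by (metis of_nat_Suc add.commute)
      then show "c \<le> Y \<omega> + e" using all[rule_format, of n] by simp
    qed
    then show "\<omega> \<in> {\<omega>\<in>space M. c \<le> Y \<omega>}" using w unfolding A_def by blast
  next
    fix \<omega> assume "\<omega> \<in> {\<omega>\<in>space M. c \<le> Y \<omega>}"
    then have w: "\<omega> \<in> space M" "c \<le> Y \<omega>" by auto
    have "c - 1 / (real n + 1) < Y \<omega>" for n
    proof -
      have "0 < 1 / (real n + 1)" by simp
      then show ?thesis using w by linarith
    qed
    then show "\<omega> \<in> (\<Inter>n. A n)" unfolding A_def using w by blast
  qed
  then have "prob (\<Inter>n. A n) < 1/2" using lt by simp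
  then obtain n where n: "prob (A n) < 1/2" using dec_lt[OF Aev dec] by blast
  define d where "d = c - 1 / (real n + 1)"
  have dc: "d < c" by (simp add: d_def)
  have int1: "integrable M (\<lambda>\<omega>. \<bar>d - Y \<omega>\<bar>)" "integrable M (\<lambda>\<omega>. \<bar>c - Y \<omega>\<bar>)"
    using Y by auto
  have int2: "integrable M (\<lambda>\<omega>. (c - d) * (2 * indicator (A n) \<omega> - 1))"
    using Aev by (rule int_ind_aff)
  have "(\<integral>\<omega>. \<bar>d - Y \<omega>\<bar> \<partial>M) \<le> (\<integral>\<omega>. \<bar>c - Y \<omega>\<bar> + (c - d) * (2 * indicator (A n) \<omega> - 1) \<partial>M)"
  proof (intro integral_mono Bochner_Integration.integrable_add int1 int2)
    fix \<omega> assume "\<omega> \<in> space M"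
    then have ind: "indicator (A n) \<omega> = (if d < Y \<omega> then 1 else (0::real))"
      by (simp add: A_def d_def indicator_def)
    show "\<bar>d - Y \<omega>\<bar> \<le> \<bar>c - Y \<omega>\<bar> + (c - d) * (2 * indicator (A n) \<omega> - 1)"
      using dc unfolding ind by (simp add: abs_real_def)
  qed
  also have "\<dots> = (\<integral>\<omega>. \<bar>c - Y \<omega>\<bar> \<partial>M) + (c - d) * (2 * prob (A n) - 1)"
    by (subst Bochner_Integration.integral_add[OF int1(2) int2]) (simp only: integral_ind_aff[OF Aev])
  also have "\<dots> < (\<integral>\<omega>. \<bar>c - Y \<omega>\<bar> \<partial>M)"
    using n dc by (simp add: mult_pos_neg)
  finally show False using opt[of d] by simp
qed

lemma opt_med:
  fixes Y :: "'a \<Rightarrow> real"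
  assumes Y: "integrable M Y" and opt: "\<And>d. (\<integral>\<omega>. \<bar>c - Y \<omega>\<bar> \<partial>M) \<le> (\<integral>\<omega>. \<bar>d - Y \<omega>\<bar> \<partial>M)"
  shows "c \<in> Med M Y"
proof -
  have 1: "1/2 \<le> prob {\<omega>\<in>space M. c \<le> Y \<omega>}" by (rule opt_half_aux[OF Y opt])
  have Y': "integrable M (\<lambda>\<omega>. - Y \<omega>)" using Y by auto
  have "1/2 \<le> prob {\<omega>\<in>space M. - c \<le> - Y \<omega>}"
  proof (rule opt_half_aux[OF Y'])
    fix d
    have e1: "(\<lambda>\<omega>. \<bar>- c - - Y \<omega>\<bar>) = (\<lambda>\<omega>. \<bar>c - Y \<omega>\<bar>)" by (rule ext) arith
    have e2: "(\<lambda>\<omega>. \<bar>d - - Y \<omega>\<bar>) = (\<lambda>\<omega>. \<bar>- d - Y \<omega>\<bar>)" by (rule ext) arith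
    show "(\<integral>\<omega>. \<bar>- c - - Y \<omega>\<bar> \<partial>M) \<le> (\<integral>\<omega>. \<bar>d - - Y \<omega>\<bar> \<partial>M)"
      unfolding e1 e2 by (rule opt)
  qed
  then show ?thesis using 1 by (simp add: Med_def)
qed

end


lemma inv_mono: "m \<le> n \<Longrightarrow> 1 / (real n + 1) \<le> 1 / (real m + 1)"
  by (intro divide_left_mono) auto

lemma inv_small: "0 < (e::real) \<Longrightarrow> \<exists>n. 1 / (real n + 1) < e"
proof -
  assume "0 < e"
  then obtain n where "1 / real (Suc n) < e" using nat_approx_posE by blast
  then show ?thesis by (intro exI[of _ n]) (simp add: add.commute)
qed

lemma all_minus_le: "(\<forall>n. a - 1 / (real n + 1) \<le> (y::real)) \<longleftrightarrow> a \<le> y"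
proof
  assume h: "\<forall>n. a - 1 / (real n + 1) \<le> y"
  show "a \<le> y"
  proof (rule field_le_epsilon)
    fix e :: real assume "0 < e"
    then obtain n where "1 / (real n + 1) < e" using inv_small by blast
    then show "a \<le> y + e" using h[rule_format, of n] by simp
  qed
next
  assume "a \<le> y"
  show "\<forall>n. a - 1 / (real n + 1) \<le> y"
  proof
    fix n
    have "0 \<le> 1 / (real n + 1)" by simp
    then show "a - 1 / (real n + 1) \<le> y" using \<open>a \<le> y\<close> by linarith
  qed
qed

lemma all_lt_plus: "(\<forall>n. (y::real) < a + 1 / (real n + 1)) \<longleftrightarrow> y \<le> a"
proof
  assume h: "\<forall>n. y < a + 1 / (real n + 1)"
  show "y \<le> a"
  proof (rule field_le_epsilon)
    fix e :: real assume "0 < e"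
    then obtain n where "1 / (real n + 1) < e" using inv_small by blast
    then show "y \<le> a + e" using h[rule_format, of n] by simp
  qed
next
  assume "y \<le> a"
  show "\<forall>n. y < a + 1 / (real n + 1)"
  proof
    fix n
    have "0 < 1 / (real n + 1)" by simp
    then show "y < a + 1 / (real n + 1)" using \<open>y \<le> a\<close> by linarith
  qed
qed

context prob_space
begin

lemma hi_ex:
  fixes Y :: "'a \<Rightarrow> real"
  assumes [measurable]: "Y \<in> borel_measurable M"
  shows "\<exists>c. 1/2 \<le> prob {\<omega>\<in>space M. c \<le> Y \<omega>}"
proof -
  define A where "A n = {\<omega>\<in>space M. Y \<omega> < - real n}" for n
  have Aev: "A n \<in> events" for n unfolding A_def by measurable
  have dec: "decseq A" unfolding decseq_def A_def by (auto simp del: of_nat_le_iff)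
  have "(\<Inter>n. A n) = {}"
  proof safe
    fix \<omega> assume w: "\<omega> \<in> (\<Inter>n. A n)"
    obtain n :: nat where n: "- Y \<omega> \<le> real n" using real_arch_simple by blast
    have "\<omega> \<in> A n" using w by blast
    then have "Y \<omega> < - real n" unfolding A_def by blast
    then show "\<omega> \<in> {}" using n by linarith
  qed
  then have "prob (\<Inter>n. A n) < 1/2" by simp
  then obtain n where n: "prob (A n) < 1/2" using dec_lt[OF Aev dec] by blast
  have "{\<omega>\<in>space M. - real n \<le> Y \<omega>} = space M - A n" unfolding A_def by auto
  then have "prob {\<omega>\<in>space M. - real n \<le> Y \<omega>} = 1 - prob (A n)" using prob_compl[OF Aev] by simp
  then show ?thesis using n by (intro exI[of _ "- real n"]) simp
qed

lemma hi_bdd: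
  fixes Y :: "'a \<Rightarrow> real"
  assumes [measurable]: "Y \<in> borel_measurable M"
  shows "bdd_above {c. 1/2 \<le> prob {\<omega>\<in>space M. c \<le> Y \<omega>}}"
proof -
  define A where "A n = {\<omega>\<in>space M. real n \<le> Y \<omega>}" for n
  have Aev: "A n \<in> events" for n unfolding A_def by measurable
  have dec: "decseq A" unfolding decseq_def A_def by (auto simp del: of_nat_le_iff)
  have "(\<Inter>n. A n) = {}"
  proof safe
    fix \<omega> assume w: "\<omega> \<in> (\<Inter>n. A n)"
    obtain n :: nat where n: "Y \<omega> < real n" using reals_Archimedean2 by blast
    have "\<omega> \<in> A n" using w by blast
    then have "real n \<le> Y \<omega>" unfolding A_def by blast
    then show "\<omega> \<in> {}" using n by linarith
  qed
  then have "prob (\<Inter>n. A n) < 1/2" by simp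
  then obtain n where n: "prob (A n) < 1/2" using dec_lt[OF Aev dec] by blast
  show ?thesis
  proof (rule bdd_aboveI[of _ "real n"])
    fix c assume c: "c \<in> {c. 1/2 \<le> prob {\<omega>\<in>space M. c \<le> Y \<omega>}}"
    show "c \<le> real n"
    proof (rule ccontr)
      assume "\<not> c \<le> real n"
      then have "{\<omega>\<in>space M. c \<le> Y \<omega>} \<subseteq> A n" unfolding A_def by auto
      then have "prob {\<omega>\<in>space M. c \<le> Y \<omega>} \<le> prob (A n)" using Aev by (intro finite_measure_mono) auto
      then show False using c n by simp
    qed
  qed
qed

lemma hi_ge:
  fixes Y :: "'a \<Rightarrow> real"
  assumes [measurable]: "Y \<in> borel_measurable M" and c: "c \<le> hi M Y"
  shows "1/2 \<le> prob {\<omega>\<in>space M. c \<le> Y \<omega>}"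
proof -
  define H where "H = hi M Y"
  define A where "A n = {\<omega>\<in>space M. H - 1 / (real n + 1) \<le> Y \<omega>}" for n
  have Aev: "A n \<in> events" for n unfolding A_def by measurable
  have dec: "decseq A" unfolding decseq_def A_def
  proof (intro allI impI subsetI)
    fix m n \<omega> assume mn: "m \<le> n" and "\<omega> \<in> {\<omega>\<in>space M. H - 1 / (real n + 1) \<le> Y \<omega>}"
    then show "\<omega> \<in> {\<omega>\<in>space M. H - 1 / (real m + 1) \<le> Y \<omega>}" using inv_mono[OF mn] by auto
  qed
  have "1/2 \<le> prob (A n)" for n
  proof -
    have "H - 1 / (real n + 1) < Sup {c. 1/2 \<le> prob {\<omega>\<in>space M. c \<le> Y \<omega>}}"
      by (simp add: H_def hi_def)
    then obtain s where s: "1/2 \<le> prob {\<omega>\<in>space M. s \<le> Y \<omega>}" "H - 1 / (real n + 1) < s"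
    proof -
      have ne: "{c. 1/2 \<le> prob {\<omega>\<in>space M. c \<le> Y \<omega>}} \<noteq> {}" using hi_ex[of Y] by auto
      show ?thesis using \<open>H - 1 / (real n + 1) < Sup _\<close> unfolding less_cSup_iff[OF ne hi_bdd[OF assms(1)]]
        using that by blast
    qed
    have "{\<omega>\<in>space M. s \<le> Y \<omega>} \<subseteq> A n" unfolding A_def using s(2) by auto
    then have "prob {\<omega>\<in>space M. s \<le> Y \<omega>} \<le> prob (A n)" using Aev by (intro finite_measure_mono) auto
    then show ?thesis using s by simp
  qed
  then have "1/2 \<le> prob (\<Inter>n. A n)" by (intro dec_half[OF Aev dec])
  moreover have "(\<Inter>n. A n) = {\<omega>\<in>space M. H \<le> Y \<omega>}" unfolding A_def using all_minus_le by auto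
  ultimately have "1/2 \<le> prob {\<omega>\<in>space M. H \<le> Y \<omega>}" by simp
  moreover have "prob {\<omega>\<in>space M. H \<le> Y \<omega>} \<le> prob {\<omega>\<in>space M. c \<le> Y \<omega>}"
    using c by (intro finite_measure_mono) (auto simp: H_def)
  ultimately show ?thesis by simp
qed

lemma hi_lt:
  fixes Y :: "'a \<Rightarrow> real"
  assumes [measurable]: "Y \<in> borel_measurable M" and c: "hi M Y < c"
  shows "prob {\<omega>\<in>space M. c \<le> Y \<omega>} < 1/2"
proof (rule ccontr)
  assume "\<not> ?thesis"
  then have "c \<le> hi M Y" unfolding hi_def by (intro cSup_upper hi_bdd) auto
  then show False using c by simp
qed

lemma hi_med:
  fixes Y :: "'a \<Rightarrow> real"
  assumes [measurable]: "Y \<in> borel_measurable M"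
  shows "hi M Y \<in> Med M Y"
proof -
  define H where "H = hi M Y"
  define A where "A n = {\<omega>\<in>space M. Y \<omega> < H + 1 / (real n + 1)}" for n
  have Aev: "A n \<in> events" for n unfolding A_def by measurable
  have dec: "decseq A" unfolding decseq_def A_def
  proof (intro allI impI subsetI)
    fix m n \<omega> assume mn: "m \<le> n" and "\<omega> \<in> {\<omega>\<in>space M. Y \<omega> < H + 1 / (real n + 1)}"
    then show "\<omega> \<in> {\<omega>\<in>space M. Y \<omega> < H + 1 / (real m + 1)}" using inv_mono[OF mn] by auto
  qed
  have "1/2 \<le> prob (A n)" for n
  proof -
    have "prob {\<omega>\<in>space M. H + 1 / (real n + 1) \<le> Y \<omega>} < 1/2"
      by (rule hi_lt) (auto simp: H_def)
    moreover have "A n = space M - {\<omega>\<in>space M. H + 1 / (real n + 1) \<le> Y \<omega>}" unfolding A_def by auto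
    moreover have "{\<omega>\<in>space M. H + 1 / (real n + 1) \<le> Y \<omega>} \<in> events" by measurable
    ultimately show ?thesis using prob_compl by simp
  qed
  then have "1/2 \<le> prob (\<Inter>n. A n)" by (intro dec_half[OF Aev dec])
  moreover have "(\<Inter>n. A n) = {\<omega>\<in>space M. Y \<omega> \<le> H}" unfolding A_def using all_lt_plus by auto
  ultimately have "1/2 \<le> prob {\<omega>\<in>space M. Y \<omega> \<le> H}" by simp
  moreover have "1/2 \<le> prob {\<omega>\<in>space M. H \<le> Y \<omega>}" by (rule hi_ge) (auto simp: H_def)
  ultimately show ?thesis by (simp add: Med_def H_def)
qed

lemma hi_mono:
  fixes Y Z :: "'a \<Rightarrow> real"
  assumes [measurable]: "Y \<in> borel_measurable M" "Z \<in> borel_measurable M"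
    and le: "\<And>\<omega>. \<omega> \<in> space M \<Longrightarrow> Y \<omega> \<le> Z \<omega>"
  shows "hi M Y \<le> hi M Z"
  unfolding hi_def
proof (rule cSup_least)
  show "{c. 1/2 \<le> prob {\<omega>\<in>space M. c \<le> Y \<omega>}} \<noteq> {}" using hi_ex[of Y] by auto
  fix c assume c: "c \<in> {c. 1/2 \<le> prob {\<omega>\<in>space M. c \<le> Y \<omega>}}"
  have "prob {\<omega>\<in>space M. c \<le> Y \<omega>} \<le> prob {\<omega>\<in>space M. c \<le> Z \<omega>}"
  proof (intro finite_measure_mono subsetI)
    fix \<omega> assume "\<omega> \<in> {\<omega>\<in>space M. c \<le> Y \<omega>}"
    then show "\<omega> \<in> {\<omega>\<in>space M. c \<le> Z \<omega>}" using le[of \<omega>] by auto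
  qed measurable
  then show "c \<le> Sup {c. 1/2 \<le> prob {\<omega>\<in>space M. c \<le> Z \<omega>}}"
    using c by (intro cSup_upper hi_bdd) auto
qed

lemma hi_sum_nonneg:
  fixes Y Z :: "'a \<Rightarrow> real"
  assumes [measurable]: "Y \<in> borel_measurable M" "Z \<in> borel_measurable M"
    and le: "\<And>\<omega>. \<omega> \<in> space M \<Longrightarrow> 0 \<le> Y \<omega> + Z \<omega>"
  shows "0 \<le> hi M Y + hi M Z"
proof (rule ccontr)
  assume neg: "\<not> 0 \<le> hi M Y + hi M Z"
  define c where "c = (hi M Y - hi M Z) / 2"
  have c1: "hi M Y < c" "hi M Z < - c" using neg unfolding c_def by (simp_all add: field_simps)
  have 1: "prob {\<omega>\<in>space M. c \<le> Y \<omega>} < 1/2" using c1 by (intro hi_lt) auto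
  have 2: "prob {\<omega>\<in>space M. - c \<le> Z \<omega>} < 1/2" using c1 by (intro hi_lt) auto
  have "space M = {\<omega>\<in>space M. c \<le> Y \<omega>} \<union> {\<omega>\<in>space M. - c \<le> Z \<omega>}"
  proof (intro set_eqI iffI)
    fix \<omega> assume w: "\<omega> \<in> space M"
    have "c \<le> Y \<omega> \<or> - c \<le> Z \<omega>" using le[OF w] by linarith
    then show "\<omega> \<in> {\<omega>\<in>space M. c \<le> Y \<omega>} \<union> {\<omega>\<in>space M. - c \<le> Z \<omega>}" using w by blast
  qed auto
  moreover have ev: "{\<omega>\<in>space M. c \<le> Y \<omega>} \<in> events" "{\<omega>\<in>space M. - c \<le> Z \<omega>} \<in> events" by measurable
  ultimately have "prob (space M) \<le> prob {\<omega>\<in>space M. c \<le> Y \<omega>} + prob {\<omega>\<in>space M. - c \<le> Z \<omega>}"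
    using measure_subadditive[OF ev] by (simp add: emeasure_finite)
  then show False using 1 2 prob_space by simp
qed

end


lemma supp_rat_char:
  assumes "A \<in> Fc" "u \<in> {-1,1}" "0 < \<alpha>" "\<alpha> \<le> 1"
  shows "a \<le> supp_fun A u \<alpha> \<longleftrightarrow> (\<forall>q\<in>\<rat> \<inter> {0<..<1}. q < \<alpha> \<longrightarrow> a \<le> supp_fun A u q)"
proof
  assume "a \<le> supp_fun A u \<alpha>"
  then show "\<forall>q\<in>\<rat> \<inter> {0<..<1}. q < \<alpha> \<longrightarrow> a \<le> supp_fun A u q"
    using supp_mono[OF assms(1,2)] assms(4) by (meson IntD2 greaterThanLessThan_iff less_eq_real_def order_trans)
next
  assume h: "\<forall>q\<in>\<rat> \<inter> {0<..<1}. q < \<alpha> \<longrightarrow> a \<le> supp_fun A u q"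
  show "a \<le> supp_fun A u \<alpha>"
  proof (rule supp_left[OF assms])
    fix \<beta> assume b: "0 < \<beta>" "\<beta> < \<alpha>"
    obtain q where q: "q \<in> \<rat>" "\<beta> < q" "q < \<alpha>" using Rats_dense_in_real[OF b(2)] by blast
    have "a \<le> supp_fun A u q" using h q b assms(4) by auto
    also have "\<dots> \<le> supp_fun A u \<beta>" using supp_mono[OF assms(1,2), of \<beta> q] q b assms(4) by auto
    finally show "a \<le> supp_fun A u \<beta>" .
  qed
qed

lemma joint_meas:
  fixes F :: "'a \<Rightarrow> real \<Rightarrow> real"
  assumes F: "\<And>\<omega>. \<omega> \<in> space M \<Longrightarrow> F \<omega> \<in> Fc" and u: "u \<in> {-1,1}"
    and m: "\<And>\<alpha>. \<alpha> \<in> {0..1} \<Longrightarrow> (\<lambda>\<omega>. supp_fun (F \<omega>) u \<alpha>) \<in> borel_measurable M"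
  shows "(\<lambda>(\<omega>,\<alpha>). indicator {0<..1} \<alpha> * supp_fun (F \<omega>) u \<alpha>) \<in> borel_measurable (M \<Otimes>\<^sub>M lborel)"
  unfolding borel_measurable_iff_ge
proof
  fix a
  define Q where "Q = \<rat> \<inter> {0<..<1::real}"
  define R where "R = (space M \<times> {0<..1}) \<inter> (\<Inter>q\<in>Q. (space M \<times> {\<alpha>. \<not> q < \<alpha>}) \<union> ({\<omega>\<in>space M. a \<le> supp_fun (F \<omega>) u q} \<times> UNIV))"
  define S where "S = space M \<times> (if a \<le> 0 then - {0<..1::real} else {})"
  have "{x \<in> space (M \<Otimes>\<^sub>M lborel). a \<le> (case x of (\<omega>,\<alpha>) \<Rightarrow> indicator {0<..1} \<alpha> * supp_fun (F \<omega>) u \<alpha>)} = S \<union> R"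
  proof (intro set_eqI)
    fix x :: "'a \<times> real"
    obtain \<omega> \<alpha> where x: "x = (\<omega>, \<alpha>)" by fastforce
    show "x \<in> {x \<in> space (M \<Otimes>\<^sub>M lborel). a \<le> (case x of (\<omega>,\<alpha>) \<Rightarrow> indicator {0<..1} \<alpha> * supp_fun (F \<omega>) u \<alpha>)} \<longleftrightarrow> x \<in> S \<union> R"
    proof (cases "\<alpha> \<in> {0<..1}")
      case True
      then have "\<omega> \<in> space M \<Longrightarrow> a \<le> supp_fun (F \<omega>) u \<alpha> \<longleftrightarrow> (\<forall>q\<in>Q. q < \<alpha> \<longrightarrow> a \<le> supp_fun (F \<omega>) u q)"
        unfolding Q_def by (intro supp_rat_char F u) auto
      then show ?thesis using True unfolding x R_def S_def Q_def by (auto simp: space_pair_measure)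
    next
      case False
      then show ?thesis unfolding x R_def S_def by (auto simp: space_pair_measure)
    qed
  qed
  also have "S \<union> R \<in> sets (M \<Otimes>\<^sub>M lborel)"
  proof (intro sets.Un)
    show "S \<in> sets (M \<Otimes>\<^sub>M lborel)" unfolding S_def by (intro pair_measureI) auto
    have cQ: "countable Q" unfolding Q_def by (intro countable_Int1 countable_rat)
    have nQ: "Q \<noteq> {}" unfolding Q_def by (intro ex_in_conv[THEN iffD1] exI[of _ "1/2"]) auto
    have "(\<Inter>q\<in>Q. (space M \<times> {\<alpha>. \<not> q < \<alpha>}) \<union> ({\<omega>\<in>space M. a \<le> supp_fun (F \<omega>) u q} \<times> UNIV)) \<in> sets (M \<Otimes>\<^sub>M lborel)"
    proof (intro sets.countable_INT' cQ nQ image_subsetI sets.Un pair_measureI)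
      fix q assume "q \<in> Q"
      then have "q \<in> {0..1}" unfolding Q_def by auto
      then show "{\<omega>\<in>space M. a \<le> supp_fun (F \<omega>) u q} \<in> sets M"
        using m[of q] unfolding borel_measurable_iff_ge by blast
    qed auto
    then show "R \<in> sets (M \<Otimes>\<^sub>M lborel)" unfolding R_def by (intro sets.Int pair_measureI) auto
  qed
  finally show "{x \<in> space (M \<Otimes>\<^sub>M lborel). a \<le> (case x of (\<omega>,\<alpha>) \<Rightarrow> indicator {0<..1} \<alpha> * supp_fun (F \<omega>) u \<alpha>)} \<in> sets (M \<Otimes>\<^sub>M lborel)" .
qed

lemma single_meas:
  assumes "A \<in> Fc" "u \<in> {-1,1}"
  shows "(\<lambda>\<alpha>. indicator {0<..1} \<alpha> * supp_fun A u \<alpha>) \<in> borel_measurable lborel"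
proof -
  have "(\<lambda>(\<omega>,\<alpha>). indicator {0<..1} \<alpha> * supp_fun ((\<lambda>_. A) \<omega>) u \<alpha>) \<in> borel_measurable (count_space (UNIV::unit set) \<Otimes>\<^sub>M lborel)"
    by (rule joint_meas) (use assms in auto)
  from measurable_compose_Pair1[OF _ this, of "()"] show ?thesis by simp
qed


definition L :: "(real \<Rightarrow> real) \<Rightarrow> (real \<Rightarrow> real) \<Rightarrow> real \<Rightarrow> ennreal" where
  "L A B u = (\<integral>\<^sup>+\<alpha>. ennreal \<bar>indicator {0<..1} \<alpha> * supp_fun A u \<alpha> - indicator {0<..1} \<alpha> * supp_fun B u \<alpha>\<bar> \<partial>lborel)"

lemma ind_abs: "\<bar>indicator S x * a - indicator S x * b\<bar> = indicator S x * \<bar>a - b :: real\<bar>"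
  by (simp add: indicator_def)

lemma LBINT_enn:
  assumes A: "A \<in> Fc" and B: "B \<in> Fc" and u: "u \<in> {-1,1}"
  shows "ennreal (LBINT \<alpha>=0..1. \<bar>supp_fun A u \<alpha> - supp_fun B u \<alpha>\<bar>) = L A B u"
proof -
  define h where "h \<alpha> = \<bar>indicator {0<..1} \<alpha> * supp_fun A u \<alpha> - indicator {0<..1} \<alpha> * supp_fun B u \<alpha>\<bar>" for \<alpha>
  have hm: "h \<in> borel_measurable lborel"
    unfolding h_def using single_meas[OF A u] single_meas[OF B u] by measurable
  have hi: "integrable lborel h"
  proof (rule integrableI_bounded_set[where A="{0<..1}" and B="norm0 A + norm0 B"])
    show "AE x in lborel. x \<in> {0<..1} \<longrightarrow> norm (h x) \<le> norm0 A + norm0 B"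
    proof (intro AE_I2 impI)
      fix x :: real assume x: "x \<in> {0<..1}"
      then have "\<bar>supp_fun A u x\<bar> \<le> norm0 A" "\<bar>supp_fun B u x\<bar> \<le> norm0 B"
        using supp_bound[OF A u] supp_bound[OF B u] by auto
      then show "norm (h x) \<le> norm0 A + norm0 B" using x by (simp add: h_def)
    qed
    show "{0<..1::real} \<in> sets lborel" by simp
    show "h \<in> borel_measurable lborel" by (rule hm)
    show "emeasure lborel {0<..1::real} < \<infinity>" by simp
    show "AE x in lborel. x \<notin> {0<..1} \<longrightarrow> h x = 0" by (intro AE_I2) (simp add: h_def)
  qed
  have "(LBINT \<alpha>=0..1. \<bar>supp_fun A u \<alpha> - supp_fun B u \<alpha>\<bar>) = (LBINT \<alpha>:{0<..1}. \<bar>supp_fun A u \<alpha> - supp_fun B u \<alpha>\<bar>)"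
  proof -
    have e: "{x. (0::ereal) < ereal x \<and> ereal x \<le> (1::ereal)} = {0<..1::real}" by auto
    show ?thesis by (subst interval_integral_Ioc') (simp_all only: e, simp)
  qed
  also have "\<dots> = integral\<^sup>L lborel h"
    unfolding set_lebesgue_integral_def h_def by (intro Bochner_Integration.integral_cong) (auto simp: indicator_def)
  finally have "ennreal (LBINT \<alpha>=0..1. \<bar>supp_fun A u \<alpha> - supp_fun B u \<alpha>\<bar>) = ennreal (integral\<^sup>L lborel h)" by simp
  also have "\<dots> = (\<integral>\<^sup>+\<alpha>. ennreal (h \<alpha>) \<partial>lborel)"
  proof -
    have "AE x in lborel. 0 \<le> h x" by (simp add: h_def)
    from nn_integral_eq_integral[OF hi this] show ?thesis by simp
  qed
  finally show ?thesis by (simp only: L_def h_def)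
qed

lemma rho1_enn:
  assumes A: "A \<in> Fc" and B: "B \<in> Fc"
  shows "ennreal (rho1 A B) = ennreal (1/2) * L A B (-1) + ennreal (1/2) * L A B 1"
proof -
  define I where "I u = (LBINT \<alpha>=0..1. \<bar>supp_fun A u \<alpha> - supp_fun B u \<alpha>\<bar>)" for u
  have I0: "0 \<le> I u" for u unfolding I_def interval_lebesgue_integral_def set_lebesgue_integral_def
    by (simp add: Bochner_Integration.integral_nonneg)
  have "rho1 A B = 1/2 * I (-1) + 1/2 * I 1" unfolding rho1_def I_def by simp
  then have "ennreal (rho1 A B) = ennreal (1/2 * I (-1)) + ennreal (1/2 * I 1)"
    using I0 by (simp only:) (rule ennreal_plus; simp)
  also have "\<dots> = ennreal (1/2) * ennreal (I (-1)) + ennreal (1/2) * ennreal (I 1)"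
    by (rule arg_cong2[where f="(+)"]; rule ennreal_mult) (auto simp: I0)
  finally have "ennreal (rho1 A B) = ennreal (1/2) * ennreal (I (-1)) + ennreal (1/2) * ennreal (I 1)" .
  then show ?thesis unfolding I_def using LBINT_enn[OF A B] by simp
qed


locale frv = prob_space M for M :: "'a measure" +
  fixes X :: "'a \<Rightarrow> real \<Rightarrow> real"
  assumes frv: "fuzzy_random_variable M X"
    and fin: "(\<integral>\<^sup>+\<omega>. ennreal (norm0 (X \<omega>)) \<partial>M) < \<infinity>"
begin

interpretation P: pair_sigma_finite M lborel
  unfolding pair_sigma_finite_def using sigma_finite_measure_axioms sigma_finite_lborel by simp

lemma XFc: "\<omega> \<in> space M \<Longrightarrow> X \<omega> \<in> Fc"
  using frv by (simp add: fuzzy_random_variable_def)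

lemma Ymeas: "\<alpha> \<in> {0..1} \<Longrightarrow> (\<lambda>\<omega>. supp_fun (X \<omega>) u \<alpha>) \<in> borel_measurable M"
  using supp_meas[OF frv] by blast

lemma Yint: "u \<in> {-1,1} \<Longrightarrow> \<alpha> \<in> {0..1} \<Longrightarrow> integrable M (\<lambda>\<omega>. supp_fun (X \<omega>) u \<alpha>)"
  using supp_integrable[OF frv fin] by blast

definition G :: "(real \<Rightarrow> real) \<Rightarrow> real \<Rightarrow> real \<Rightarrow> ennreal" where
  "G U u \<alpha> = (\<integral>\<^sup>+\<omega>. ennreal \<bar>indicator {0<..1} \<alpha> * supp_fun U u \<alpha> - indicator {0<..1} \<alpha> * supp_fun (X \<omega>) u \<alpha>\<bar> \<partial>M)"

lemma fjoint:
  assumes U: "U \<in> Fc" and u: "u \<in> {-1,1}"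
  shows "(\<lambda>(\<omega>,\<alpha>). ennreal \<bar>indicator {0<..1} \<alpha> * supp_fun U u \<alpha> - indicator {0<..1} \<alpha> * supp_fun (X \<omega>) u \<alpha>\<bar>)
     \<in> borel_measurable (M \<Otimes>\<^sub>M lborel)"
proof -
  have 1: "(\<lambda>(\<omega>,\<alpha>). indicator {0<..1} \<alpha> * supp_fun ((\<lambda>_. U) \<omega>) u \<alpha>) \<in> borel_measurable (M \<Otimes>\<^sub>M lborel)"
    by (rule joint_meas) (use U u in auto)
  have 2: "(\<lambda>(\<omega>,\<alpha>). indicator {0<..1} \<alpha> * supp_fun (X \<omega>) u \<alpha>) \<in> borel_measurable (M \<Otimes>\<^sub>M lborel)"
    by (rule joint_meas) (use XFc u Ymeas in auto)
  have "(\<lambda>x. ennreal \<bar>(case x of (\<omega>,\<alpha>) \<Rightarrow> indicator {0<..1} \<alpha> * supp_fun ((\<lambda>_. U) \<omega>) u \<alpha>) - (case x of (\<omega>,\<alpha>) \<Rightarrow> indicator {0<..1} \<alpha> * supp_fun (X \<omega>) u \<alpha>)\<bar>) \<in> borel_measurable (M \<Otimes>\<^sub>M lborel)"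
    using 1 2 by measurable
  then show ?thesis by (simp add: case_prod_beta')
qed

lemma E_decomp:
  assumes U: "U \<in> Fc"
  shows "(\<integral>\<^sup>+\<omega>. ennreal (rho1 U (X \<omega>)) \<partial>M)
    = ennreal (1/2) * (\<integral>\<^sup>+\<alpha>. G U (-1) \<alpha> \<partial>lborel) + ennreal (1/2) * (\<integral>\<^sup>+\<alpha>. G U 1 \<alpha> \<partial>lborel)"
proof -
  have Lm: "(\<lambda>\<omega>. L U (X \<omega>) u) \<in> borel_measurable M" if u: "u \<in> {-1,1}" for u
    unfolding L_def using lborel.borel_measurable_nn_integral_fst[OF fjoint[OF U u]] by simp
  have LG: "(\<integral>\<^sup>+\<omega>. L U (X \<omega>) u \<partial>M) = (\<integral>\<^sup>+\<alpha>. G U u \<alpha> \<partial>lborel)" if u: "u \<in> {-1,1}" for u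
    unfolding L_def G_def using P.Fubini[OF fjoint[OF U u]] by simp
  have "(\<integral>\<^sup>+\<omega>. ennreal (rho1 U (X \<omega>)) \<partial>M) = (\<integral>\<^sup>+\<omega>. ennreal (1/2) * L U (X \<omega>) (-1) + ennreal (1/2) * L U (X \<omega>) 1 \<partial>M)"
    by (intro nn_integral_cong rho1_enn U XFc)
  also have "\<dots> = ennreal (1/2) * (\<integral>\<^sup>+\<omega>. L U (X \<omega>) (-1) \<partial>M) + ennreal (1/2) * (\<integral>\<^sup>+\<omega>. L U (X \<omega>) 1 \<partial>M)"
    using Lm by (simp add: nn_integral_add nn_integral_cmult)
  finally show ?thesis using LG by simp
qed

lemma G_in:
  assumes U: "U \<in> Fc" and u: "u \<in> {-1,1}" and a: "\<alpha> \<in> {0<..1}"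
  shows "G U u \<alpha> = ennreal (\<integral>\<omega>. \<bar>supp_fun U u \<alpha> - supp_fun (X \<omega>) u \<alpha>\<bar> \<partial>M)"
proof -
  have i: "integrable M (\<lambda>\<omega>. \<bar>supp_fun U u \<alpha> - supp_fun (X \<omega>) u \<alpha>\<bar>)"
    using Yint[OF u, of \<alpha>] a by auto
  have "G U u \<alpha> = (\<integral>\<^sup>+\<omega>. ennreal \<bar>supp_fun U u \<alpha> - supp_fun (X \<omega>) u \<alpha>\<bar> \<partial>M)"
    using a by (simp add: G_def)
  also have "\<dots> = ennreal (\<integral>\<omega>. \<bar>supp_fun U u \<alpha> - supp_fun (X \<omega>) u \<alpha>\<bar> \<partial>M)"
    by (rule nn_integral_eq_integral[OF i]) simp
  finally show ?thesis .
qed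

lemma G_out: "\<alpha> \<notin> {0<..1} \<Longrightarrow> G U u \<alpha> = 0"
  by (simp add: G_def)

lemma G_meas:
  assumes U: "U \<in> Fc" and u: "u \<in> {-1,1}"
  shows "G U u \<in> borel_measurable lborel"
proof -
  have "(\<lambda>(\<alpha>,\<omega>). ennreal \<bar>indicator {0<..1} \<alpha> * supp_fun U u \<alpha> - indicator {0<..1} \<alpha> * supp_fun (X \<omega>) u \<alpha>\<bar>)
     \<in> borel_measurable (lborel \<Otimes>\<^sub>M M)"
    using measurable_pair_swap[OF fjoint[OF U u]] by (simp add: case_prod_beta')
  from borel_measurable_nn_integral_fst[OF this] show ?thesis
    unfolding G_def[abs_def] by simp
qed

end


context frv
begin

definition g :: "real \<Rightarrow> real \<Rightarrow> real" where
  "g u \<alpha> = hi M (\<lambda>\<omega>. supp_fun (X \<omega>) u \<alpha>)"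

lemma g_med: "\<alpha> \<in> {0..1} \<Longrightarrow> g u \<alpha> \<in> Med M (\<lambda>\<omega>. supp_fun (X \<omega>) u \<alpha>)"
  unfolding g_def by (intro hi_med Ymeas)

lemma g_mono:
  assumes u: "u \<in> {-1,1}" and "0 \<le> \<alpha>" "\<alpha> \<le> \<beta>" "\<beta> \<le> 1"
  shows "g u \<beta> \<le> g u \<alpha>"
  unfolding g_def using assms by (intro hi_mono Ymeas supp_mono[OF XFc u]) auto

lemma g_sum:
  assumes "\<alpha> \<in> {0..1}"
  shows "0 \<le> g 1 \<alpha> + g (-1) \<alpha>"
  unfolding g_def
proof (intro hi_sum_nonneg Ymeas assms)
  fix \<omega> assume w: "\<omega> \<in> space M"
  show "0 \<le> supp_fun (X \<omega>) 1 \<alpha> + supp_fun (X \<omega>) (-1) \<alpha>"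
    using supp_pos supp_neg[OF XFc[OF w] assms] level_eq(2)[OF XFc[OF w] assms] by simp
qed

definition bseq :: "real \<Rightarrow> nat \<Rightarrow> real" where
  "bseq \<alpha> n = \<alpha> - \<alpha> / (2 * (real n + 1))"

lemma bseq_props:
  assumes "0 < \<alpha>"
  shows "0 < bseq \<alpha> n" "bseq \<alpha> n < \<alpha>" "m \<le> n \<Longrightarrow> bseq \<alpha> m \<le> bseq \<alpha> n"
    "0 < \<beta> \<Longrightarrow> \<beta> < \<alpha> \<Longrightarrow> \<exists>n. \<beta> \<le> bseq \<alpha> n"
proof -
  have a: "\<alpha> / (2 * (real n + 1)) \<le> \<alpha> / 2" using assms by (intro divide_left_mono) auto
  then show "0 < bseq \<alpha> n" using assms unfolding bseq_def by linarith
  show "bseq \<alpha> n < \<alpha>" using assms by (simp add: bseq_def)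
  show "m \<le> n \<Longrightarrow> bseq \<alpha> m \<le> bseq \<alpha> n"
    using assms by (simp add: bseq_def divide_left_mono)
  assume b: "0 < \<beta>" "\<beta> < \<alpha>"
  then obtain n where n: "1 / (real n + 1) < 2 * (\<alpha> - \<beta>) / \<alpha>" using inv_small assms by force
  then have "\<alpha> / (2 * (real n + 1)) < \<alpha> - \<beta>" using assms by (simp add: field_simps)
  then show "\<exists>n. \<beta> \<le> bseq \<alpha> n" by (intro exI[of _ n]) (simp add: bseq_def)
qed

lemma g_left:
  assumes u: "u \<in> {-1,1}" and a: "0 < \<alpha>" "\<alpha> \<le> 1"
    and c: "\<And>\<beta>. 0 < \<beta> \<Longrightarrow> \<beta> < \<alpha> \<Longrightarrow> c \<le> g u \<beta>"
  shows "c \<le> g u \<alpha>"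
proof (rule ccontr)
  assume "\<not> c \<le> g u \<alpha>"
  define d where "d = (g u \<alpha> + c) / 2"
  have dl: "g u \<alpha> < d" "d < c" using \<open>\<not> c \<le> g u \<alpha>\<close> by (auto simp: d_def)
  have ma: "(\<lambda>\<omega>. supp_fun (X \<omega>) u \<alpha>) \<in> borel_measurable M" using a by (intro Ymeas) auto
  have p: "prob {\<omega>\<in>space M. d \<le> supp_fun (X \<omega>) u \<alpha>} < 1/2"
    using hi_lt[OF ma] dl by (simp add: g_def)
  define A where "A n = {\<omega>\<in>space M. d \<le> supp_fun (X \<omega>) u (bseq \<alpha> n)}" for n
  have bs: "bseq \<alpha> n \<in> {0..1}" for n using bseq_props[OF a(1)] a(2) by (auto intro: less_imp_le order.strict_trans2)
  have Aev: "A n \<in> events" for n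
  proof -
    have [measurable]: "(\<lambda>\<omega>. supp_fun (X \<omega>) u (bseq \<alpha> n)) \<in> borel_measurable M" using bs by (intro Ymeas)
    show ?thesis unfolding A_def by measurable
  qed
  have dec: "decseq A" unfolding decseq_def A_def
  proof (intro allI impI subsetI)
    fix m n \<omega> assume mn: "m \<le> n" and w: "\<omega> \<in> {\<omega>\<in>space M. d \<le> supp_fun (X \<omega>) u (bseq \<alpha> n)}"
    then have "supp_fun (X \<omega>) u (bseq \<alpha> n) \<le> supp_fun (X \<omega>) u (bseq \<alpha> m)"
      using supp_mono[OF XFc u] bseq_props(1,3)[OF a(1)] bs by (simp add: less_imp_le)
    then show "\<omega> \<in> {\<omega>\<in>space M. d \<le> supp_fun (X \<omega>) u (bseq \<alpha> m)}" using w by auto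
  qed
  have "(\<Inter>n. A n) = {\<omega>\<in>space M. d \<le> supp_fun (X \<omega>) u \<alpha>}"
  proof (intro set_eqI iffI)
    fix \<omega> assume w: "\<omega> \<in> (\<Inter>n. A n)"
    then have ws: "\<omega> \<in> space M" unfolding A_def by auto
    have "d \<le> supp_fun (X \<omega>) u \<alpha>"
    proof (rule supp_left[OF XFc[OF ws] u a])
      fix \<beta> assume b: "0 < \<beta>" "\<beta> < \<alpha>"
      obtain n where n: "\<beta> \<le> bseq \<alpha> n" using bseq_props(4)[OF a(1) b] by blast
      have "d \<le> supp_fun (X \<omega>) u (bseq \<alpha> n)" using w unfolding A_def by auto
      also have "\<dots> \<le> supp_fun (X \<omega>) u \<beta>" using supp_mono[OF XFc[OF ws] u, of \<beta> "bseq \<alpha> n"] n b bs[of n] by auto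
      finally show "d \<le> supp_fun (X \<omega>) u \<beta>" .
    qed
    then show "\<omega> \<in> {\<omega>\<in>space M. d \<le> supp_fun (X \<omega>) u \<alpha>}" using ws by auto
  next
    fix \<omega> assume w: "\<omega> \<in> {\<omega>\<in>space M. d \<le> supp_fun (X \<omega>) u \<alpha>}"
    have "supp_fun (X \<omega>) u \<alpha> \<le> supp_fun (X \<omega>) u (bseq \<alpha> n)" for n
      using supp_mono[OF XFc u, of \<omega> "bseq \<alpha> n" \<alpha>] w bseq_props[OF a(1)] a(2) by (auto simp: less_imp_le)
    then show "\<omega> \<in> (\<Inter>n. A n)" using w unfolding A_def by (auto intro: order.trans)
  qed
  then have "prob (\<Inter>n. A n) < 1/2" using p by simp
  then obtain n where n: "prob (A n) < 1/2" using dec_lt[OF Aev dec] by blast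
  have "c \<le> g u (bseq \<alpha> n)" using c bseq_props[OF a(1)] by auto
  then have "d \<le> hi M (\<lambda>\<omega>. supp_fun (X \<omega>) u (bseq \<alpha> n))" using dl by (simp add: g_def)
  then have "1/2 \<le> prob (A n)" unfolding A_def using bs by (intro hi_ge Ymeas)
  then show False using n by simp
qed

end


context frv
begin

definition s0 :: "real \<Rightarrow> real" where "s0 u = Sup (g u ` {0<..1})"
definition Wset :: "real \<Rightarrow> real set" where
  "Wset x = {\<alpha>\<in>{0<..1}. - g (-1) \<alpha> \<le> x \<and> x \<le> g 1 \<alpha>}"
definition W :: "real \<Rightarrow> real" where "W x = Sup (insert 0 (Wset x))"

lemma s0_bdd: "u \<in> {-1,1} \<Longrightarrow> bdd_above (g u ` {0<..1})"
  by (rule bdd_aboveI2[where M="g u 0"]) (intro g_mono; auto)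

lemma s0_ge: "u \<in> {-1,1} \<Longrightarrow> \<alpha> \<in> {0<..1} \<Longrightarrow> g u \<alpha> \<le> s0 u"
  unfolding s0_def by (intro cSup_upper s0_bdd) auto

lemma s0_less: "u \<in> {-1,1} \<Longrightarrow> c < s0 u \<Longrightarrow> \<exists>\<alpha>\<in>{0<..1}. c < g u \<alpha>"
  unfolding s0_def using less_cSup_iff[OF _ s0_bdd, of u c] by auto

lemma W_bdd: "bdd_above (insert 0 (Wset x))"
  by (rule bdd_aboveI[where M=1]) (auto simp: Wset_def)

lemma W_range: "0 \<le> W x" "W x \<le> 1"
proof -
  show "0 \<le> W x" unfolding W_def by (intro cSup_upper W_bdd) auto
  show "W x \<le> 1" unfolding W_def by (intro cSup_least) (auto simp: Wset_def)
qed

lemma W_pos: "0 < W x \<longleftrightarrow> Wset x \<noteq> {}"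
proof
  assume "0 < W x"
  then obtain \<gamma> where "\<gamma> \<in> insert 0 (Wset x)" "0 < \<gamma>"
    unfolding W_def using less_cSup_iff[OF _ W_bdd] by blast
  then show "Wset x \<noteq> {}" by auto
next
  assume "Wset x \<noteq> {}"
  then obtain \<alpha> where a: "\<alpha> \<in> Wset x" by blast
  then have "\<alpha> \<le> W x" unfolding W_def by (intro cSup_upper W_bdd) auto
  then show "0 < W x" using a by (auto simp: Wset_def)
qed

lemma W_level:
  assumes a: "\<alpha> \<in> {0<..1}"
  shows "\<alpha> \<le> W x \<longleftrightarrow> - g (-1) \<alpha> \<le> x \<and> x \<le> g 1 \<alpha>"
proof
  assume "- g (-1) \<alpha> \<le> x \<and> x \<le> g 1 \<alpha>"
  then have "\<alpha> \<in> Wset x" using a by (simp add: Wset_def)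
  then show "\<alpha> \<le> W x" unfolding W_def by (intro cSup_upper W_bdd) auto
next
  assume h: "\<alpha> \<le> W x"
  have key: "- x \<le> g (-1) \<beta> \<and> x \<le> g 1 \<beta>" if b: "0 < \<beta>" "\<beta> < \<alpha>" for \<beta>
  proof -
    have "\<beta> < Sup (insert 0 (Wset x))" using h b by (simp add: W_def)
    then obtain \<gamma> where "\<gamma> \<in> insert 0 (Wset x)" "\<beta> < \<gamma>"
      using less_cSup_iff[OF _ W_bdd] by blast
    then have \<gamma>: "\<gamma> \<in> {0<..1}" "- g (-1) \<gamma> \<le> x" "x \<le> g 1 \<gamma>" "\<beta> < \<gamma>" using b by (auto simp: Wset_def)
    have "g 1 \<gamma> \<le> g 1 \<beta>" "g (-1) \<gamma> \<le> g (-1) \<beta>" using \<gamma> b by (auto intro!: g_mono)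
    then show ?thesis using \<gamma> by auto
  qed
  have "x \<le> g 1 \<alpha>" by (rule g_left) (use a key in auto)
  moreover have "- x \<le> g (-1) \<alpha>" by (rule g_left) (use a key in auto)
  ultimately show "- g (-1) \<alpha> \<le> x \<and> x \<le> g 1 \<alpha>" by auto
qed

lemma s0_order: "- s0 (-1) \<le> s0 1"
proof -
  have "- s0 (-1) \<le> - g (-1) 1" using s0_ge[of "-1" 1] by auto
  also have "\<dots> \<le> g 1 1" using g_sum[of 1] by auto
  also have "\<dots> \<le> s0 1" using s0_ge[of 1 1] by auto
  finally show ?thesis .
qed

lemma W_level0: "closure {x. 0 < W x} = {- s0 (-1) .. s0 1}"
proof
  have "{x. 0 < W x} \<subseteq> {- s0 (-1) .. s0 1}"
  proof
    fix x assume "x \<in> {x. 0 < W x}"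
    then obtain \<alpha> where "\<alpha> \<in> Wset x" using W_pos by auto
    then have "\<alpha> \<in> {0<..1}" "- g (-1) \<alpha> \<le> x" "x \<le> g 1 \<alpha>" by (auto simp: Wset_def)
    then show "x \<in> {- s0 (-1) .. s0 1}" using s0_ge[of 1 \<alpha>] s0_ge[of "-1" \<alpha>] by auto
  qed
  then show "closure {x. 0 < W x} \<subseteq> {- s0 (-1) .. s0 1}" by (simp add: closure_minimal)
next
  show "{- s0 (-1) .. s0 1} \<subseteq> closure {x. 0 < W x}"
  proof (cases "- s0 (-1) < s0 1")
    case True
    have "{- s0 (-1) <..< s0 1} \<subseteq> {x. 0 < W x}"
    proof
      fix x assume x: "x \<in> {- s0 (-1) <..< s0 1}"
      obtain \<alpha>1 where a1: "\<alpha>1 \<in> {0<..1}" "x < g 1 \<alpha>1" using s0_less[of 1 x] x by auto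
      obtain \<alpha>2 where a2: "\<alpha>2 \<in> {0<..1}" "- x < g (-1) \<alpha>2" using s0_less[of "-1" "-x"] x by auto
      define \<alpha> where "\<alpha> = min \<alpha>1 \<alpha>2"
      have "g 1 \<alpha>1 \<le> g 1 \<alpha>" "g (-1) \<alpha>2 \<le> g (-1) \<alpha>" using a1 a2 by (auto intro!: g_mono simp: \<alpha>_def)
      then have "\<alpha> \<in> Wset x" using a1 a2 by (auto simp: Wset_def \<alpha>_def)
      then show "x \<in> {x. 0 < W x}" using W_pos by auto
    qed
    then have "closure {- s0 (-1) <..< s0 1} \<subseteq> closure {x. 0 < W x}" by (rule closure_mono)
    then show ?thesis using True by simp
  next
    case False
    then have eq: "- s0 (-1) = s0 1" using s0_order by simp
    have "- g (-1) 1 \<le> g 1 1" using g_sum[of 1] by auto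
    moreover have "- s0 (-1) \<le> - g (-1) 1" "g 1 1 \<le> s0 1" using s0_ge[of "-1" 1] s0_ge[of 1 1] by auto
    ultimately have "- g (-1) 1 = s0 1" "g 1 1 = s0 1" using eq by auto
    then have "1 \<in> Wset (s0 1)" by (simp add: Wset_def)
    then have "s0 1 \<in> {x. 0 < W x}" using W_pos by auto
    then have "s0 1 \<in> closure {x. 0 < W x}" by (rule subsetD[OF closure_subset])
    then show ?thesis using eq by simp
  qed
qed

lemma W_Fc: "W \<in> Fc"
  unfolding Fc_def
proof (intro CollectI conjI allI ballI)
  fix x show "0 \<le> W x" "W x \<le> 1" by (rule W_range)+
next
  fix \<alpha> :: real assume a: "\<alpha> \<in> {0..1}"
  show "is_compact_interval (flevel W \<alpha>)"
  proof (cases "\<alpha> = 0")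
    case True
    then have "flevel W \<alpha> = {- s0 (-1) .. s0 1}" using W_level0 by (simp add: flevel_def)
    then show ?thesis unfolding is_compact_interval_def using s0_order by blast
  next
    case False
    then have a': "\<alpha> \<in> {0<..1}" using a by auto
    have "flevel W \<alpha> = {- g (-1) \<alpha> .. g 1 \<alpha>}"
    proof (intro set_eqI)
      fix x show "x \<in> flevel W \<alpha> \<longleftrightarrow> x \<in> {- g (-1) \<alpha> .. g 1 \<alpha>}"
        using False W_level[OF a', of x] by (simp add: flevel_def)
    qed
    moreover have "- g (-1) \<alpha> \<le> g 1 \<alpha>" using g_sum[OF a] by simp
    ultimately show ?thesis unfolding is_compact_interval_def by blast
  qed
qed

lemma W_supp:
  assumes u: "u \<in> {-1,1}" and a: "\<alpha> \<in> {0<..1}"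
  shows "supp_fun W u \<alpha> = g u \<alpha>"
proof -
  have lev: "flevel W \<alpha> = {- g (-1) \<alpha> .. g 1 \<alpha>}"
  proof (intro set_eqI)
    fix x show "x \<in> flevel W \<alpha> \<longleftrightarrow> x \<in> {- g (-1) \<alpha> .. g 1 \<alpha>}"
      using a W_level[OF a, of x] by (simp add: flevel_def)
  qed
  have le: "- g (-1) \<alpha> \<le> g 1 \<alpha>" using g_sum[of \<alpha>] a by simp
  have a2: "\<alpha> \<in> {0..1}" using a by auto
  have "lo W \<alpha> = - g (-1) \<alpha>" "up W \<alpha> = g 1 \<alpha>" using lev le by (auto simp: lo_def up_def)
  then show ?thesis using u supp_pos[of W \<alpha>] supp_neg[OF W_Fc a2] by auto
qed

end


context frv
begin

lemma ev_le: "\<alpha> \<in> {0..1} \<Longrightarrow> {\<omega>\<in>space M. c \<le> supp_fun (X \<omega>) u \<alpha>} \<in> events"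
proof -
  assume "\<alpha> \<in> {0..1}"
  then have [measurable]: "(\<lambda>\<omega>. supp_fun (X \<omega>) u \<alpha>) \<in> borel_measurable M" by (rule Ymeas)
  show ?thesis by measurable
qed

lemma ev_ge: "\<alpha> \<in> {0..1} \<Longrightarrow> {\<omega>\<in>space M. supp_fun (X \<omega>) u \<alpha> \<le> c} \<in> events"
proof -
  assume "\<alpha> \<in> {0..1}"
  then have [measurable]: "(\<lambda>\<omega>. supp_fun (X \<omega>) u \<alpha>) \<in> borel_measurable M" by (rule Ymeas)
  show ?thesis by measurable
qed

lemma dec_half_gen:
  assumes "\<And>n. A n \<in> events" "decseq A"
    "\<And>n. \<exists>B\<in>events. B \<subseteq> A n \<and> 1/2 \<le> prob B" "(\<Inter>n. A n) = S"
  shows "1/2 \<le> prob S"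
proof -
  have "1/2 \<le> prob (A n)" for n
  proof -
    obtain B where B: "B \<in> events" "B \<subseteq> A n" "1/2 \<le> prob B" using assms(3)[of n] by blast
    have "prob B \<le> prob (A n)" using B assms(1) by (intro finite_measure_mono) auto
    then show ?thesis using B by simp
  qed
  then have "1/2 \<le> prob (\<Inter>n. A n)" by (intro dec_half assms)
  then show ?thesis using assms(4) by simp
qed

lemma good_dense:
  fixes a b :: real and P :: "real \<Rightarrow> bool"
  assumes good: "AE \<alpha> in lborel. \<alpha> \<in> {0<..1} \<longrightarrow> P \<alpha>" and ab: "0 \<le> a" "a < b" "b \<le> 1"
  shows "\<exists>\<gamma>. a < \<gamma> \<and> \<gamma> < b \<and> P \<gamma>"
proof (rule ccontr)
  assume neg: "\<not> (\<exists>\<gamma>. a < \<gamma> \<and> \<gamma> < b \<and> P \<gamma>)"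
  from good obtain N where N: "{x \<in> space lborel. \<not> (x \<in> {0<..1} \<longrightarrow> P x)} \<subseteq> N" "emeasure lborel N = 0" "N \<in> sets lborel"
    by (rule AE_E)
  have "{a<..<b} \<subseteq> N"
  proof
    fix x assume x: "x \<in> {a<..<b}"
    then have "\<not> P x" using neg by auto
    moreover have "x \<in> {0<..1}" using x ab by auto
    ultimately show "x \<in> N" using N(1) by auto
  qed
  then have "emeasure lborel {a<..<b} \<le> emeasure lborel N" by (intro emeasure_mono N(3))
  then show False using N(2) ab by simp
qed

lemma tseq_props:
  "0 < 1 / (real n + 1)" "1 / (real n + 1) \<le> 1"
  "m \<le> n \<Longrightarrow> 1 / (real n + 1) \<le> 1 / (real m + 1)"
  "0 < \<beta> \<Longrightarrow> \<exists>n. 1 / (real n + 1) \<le> \<beta>"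
  using inv_mono inv_small by (auto intro: less_imp_le simp: field_simps)

lemma med_closure:
  assumes U: "U \<in> Fc" and u: "u \<in> {-1,1}"
    and good: "AE \<alpha> in lborel. \<alpha> \<in> {0<..1} \<longrightarrow> supp_fun U u \<alpha> \<in> Med M (\<lambda>\<omega>. supp_fun (X \<omega>) u \<alpha>)"
    and a: "\<alpha> \<in> {0..1}"
  shows "supp_fun U u \<alpha> \<in> Med M (\<lambda>\<omega>. supp_fun (X \<omega>) u \<alpha>)"
proof -
  define sU where "sU \<beta> = supp_fun U u \<beta>" for \<beta>
  define Y where "Y \<beta> \<omega> = supp_fun (X \<omega>) u \<beta>" for \<beta> \<omega>
  have Ymono: "\<And>\<beta> \<gamma> \<omega>. \<beta> \<le> 1 \<Longrightarrow> \<gamma> \<le> \<beta> \<Longrightarrow> 0 \<le> \<gamma> \<Longrightarrow> \<omega> \<in> space M \<Longrightarrow> Y \<beta> \<omega> \<le> Y \<gamma> \<omega>"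
    unfolding Y_def using supp_mono[OF XFc u] by auto
  have Umono: "\<And>\<beta> \<gamma>. \<beta> \<le> 1 \<Longrightarrow> \<gamma> \<le> \<beta> \<Longrightarrow> 0 \<le> \<gamma> \<Longrightarrow> sU \<beta> \<le> sU \<gamma>"
    unfolding sU_def using supp_mono[OF U u] by auto
  have goodD: "\<exists>\<gamma>. a < \<gamma> \<and> \<gamma> < b \<and> 1/2 \<le> prob {\<omega>\<in>space M. Y \<gamma> \<omega> \<le> sU \<gamma>} \<and> 1/2 \<le> prob {\<omega>\<in>space M. sU \<gamma> \<le> Y \<gamma> \<omega>}"
    if "0 \<le> a" "a < b" "b \<le> 1" for a b
    using good_dense[OF good that] unfolding Med_def Y_def sU_def by auto
  show ?thesis
  proof (cases "\<alpha> = 0")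
    case False
    then have a0: "0 < \<alpha>" "\<alpha> \<le> 1" using a by auto
    note bp = bseq_props[OF a0(1)]
    have bs: "bseq \<alpha> n \<in> {0..1}" for n using bp(1,2)[of n] a0 by auto
    have 1: "1/2 \<le> prob {\<omega>\<in>space M. sU \<alpha> \<le> Y \<alpha> \<omega>}"
    proof (rule dec_half_gen)
      define A where "A n = {\<omega>\<in>space M. sU \<alpha> \<le> Y (bseq \<alpha> n) \<omega>}" for n
      show "A n \<in> events" for n unfolding A_def Y_def by (rule ev_le[OF bs])
      show "decseq A" unfolding decseq_def A_def
      proof (intro allI impI subsetI)
        fix m n \<omega> assume mn: "m \<le> n" and w: "\<omega> \<in> {\<omega>\<in>space M. sU \<alpha> \<le> Y (bseq \<alpha> n) \<omega>}"
        then have "Y (bseq \<alpha> n) \<omega> \<le> Y (bseq \<alpha> m) \<omega>" using Ymono bp(1,3) bs by (auto simp: less_imp_le)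
        then show "\<omega> \<in> {\<omega>\<in>space M. sU \<alpha> \<le> Y (bseq \<alpha> m) \<omega>}" using w by auto
      qed
      show "\<exists>B\<in>events. B \<subseteq> A n \<and> 1/2 \<le> prob B" for n
      proof -
        obtain \<gamma> where g: "bseq \<alpha> n < \<gamma>" "\<gamma> < \<alpha>" "1/2 \<le> prob {\<omega>\<in>space M. sU \<gamma> \<le> Y \<gamma> \<omega>}"
          using goodD[of "bseq \<alpha> n" \<alpha>] bp(1,2)[of n] a0 by (auto simp: less_imp_le)
        have "{\<omega>\<in>space M. sU \<gamma> \<le> Y \<gamma> \<omega>} \<subseteq> A n"
        proof
          fix \<omega> assume w: "\<omega> \<in> {\<omega>\<in>space M. sU \<gamma> \<le> Y \<gamma> \<omega>}"
          have "sU \<alpha> \<le> sU \<gamma>" using Umono[of \<alpha> \<gamma>] g bp(1)[of n] a0 by auto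
          moreover have "Y \<gamma> \<omega> \<le> Y (bseq \<alpha> n) \<omega>" using Ymono[of \<gamma> "bseq \<alpha> n" \<omega>] g bp(1)[of n] a0 w by auto
          ultimately show "\<omega> \<in> A n" using w unfolding A_def by auto
        qed
        moreover have "{\<omega>\<in>space M. sU \<gamma> \<le> Y \<gamma> \<omega>} \<in> events"
          unfolding Y_def using g bp(1)[of n] a0 by (intro ev_le) auto
        ultimately show ?thesis using g by blast
      qed
      show "(\<Inter>n. A n) = {\<omega>\<in>space M. sU \<alpha> \<le> Y \<alpha> \<omega>}"
      proof (intro set_eqI iffI)
        fix \<omega> assume w: "\<omega> \<in> (\<Inter>n. A n)"
        then have ws: "\<omega> \<in> space M" unfolding A_def by auto
        have "sU \<alpha> \<le> supp_fun (X \<omega>) u \<alpha>"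
        proof (rule supp_left[OF XFc[OF ws] u a0])
          fix \<beta> assume b: "0 < \<beta>" "\<beta> < \<alpha>"
          obtain n where n: "\<beta> \<le> bseq \<alpha> n" using bp(4)[OF b] by blast
          have "sU \<alpha> \<le> Y (bseq \<alpha> n) \<omega>" using w unfolding A_def by auto
          also have "\<dots> \<le> Y \<beta> \<omega>" using Ymono[of "bseq \<alpha> n" \<beta> \<omega>] ws n b bs[of n] by auto
          finally show "sU \<alpha> \<le> supp_fun (X \<omega>) u \<beta>" by (simp add: Y_def)
        qed
        then show "\<omega> \<in> {\<omega>\<in>space M. sU \<alpha> \<le> Y \<alpha> \<omega>}" using ws by (auto simp: Y_def)
      next
        fix \<omega> assume w: "\<omega> \<in> {\<omega>\<in>space M. sU \<alpha> \<le> Y \<alpha> \<omega>}"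
        have "Y \<alpha> \<omega> \<le> Y (bseq \<alpha> n) \<omega>" for n
          using Ymono[of \<alpha> "bseq \<alpha> n" \<omega>] w bp(1,2)[of n] a0 by auto
        then show "\<omega> \<in> (\<Inter>n. A n)" using w unfolding A_def by (auto intro: order.trans)
      qed
    qed
    have 2: "1/2 \<le> prob {\<omega>\<in>space M. Y \<alpha> \<omega> \<le> sU \<alpha>}"
    proof (rule dec_half_gen)
      define A where "A n = {\<omega>\<in>space M. Y \<alpha> \<omega> \<le> sU (bseq \<alpha> n)}" for n
      show "A n \<in> events" for n unfolding A_def Y_def by (rule ev_ge[OF a])
      show "decseq A" unfolding decseq_def A_def
      proof (intro allI impI subsetI)
        fix m n \<omega> assume mn: "m \<le> n" and w: "\<omega> \<in> {\<omega>\<in>space M. Y \<alpha> \<omega> \<le> sU (bseq \<alpha> n)}"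
        then have "sU (bseq \<alpha> n) \<le> sU (bseq \<alpha> m)" using Umono bp(1,3) bs by (auto simp: less_imp_le)
        then show "\<omega> \<in> {\<omega>\<in>space M. Y \<alpha> \<omega> \<le> sU (bseq \<alpha> m)}" using w by auto
      qed
      show "\<exists>B\<in>events. B \<subseteq> A n \<and> 1/2 \<le> prob B" for n
      proof -
        obtain \<gamma> where g: "bseq \<alpha> n < \<gamma>" "\<gamma> < \<alpha>" "1/2 \<le> prob {\<omega>\<in>space M. Y \<gamma> \<omega> \<le> sU \<gamma>}"
          using goodD[of "bseq \<alpha> n" \<alpha>] bp(1,2)[of n] a0 by (auto simp: less_imp_le)
        have "{\<omega>\<in>space M. Y \<gamma> \<omega> \<le> sU \<gamma>} \<subseteq> A n"
        proof
          fix \<omega> assume w: "\<omega> \<in> {\<omega>\<in>space M. Y \<gamma> \<omega> \<le> sU \<gamma>}"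
          have "sU \<gamma> \<le> sU (bseq \<alpha> n)" using Umono[of \<gamma> "bseq \<alpha> n"] g bp(1)[of n] a0 by auto
          moreover have "Y \<alpha> \<omega> \<le> Y \<gamma> \<omega>" using Ymono[of \<alpha> \<gamma> \<omega>] g bp(1)[of n] a0 w by auto
          ultimately show "\<omega> \<in> A n" using w unfolding A_def by auto
        qed
        moreover have "{\<omega>\<in>space M. Y \<gamma> \<omega> \<le> sU \<gamma>} \<in> events"
          unfolding Y_def using g bp(1)[of n] a0 by (intro ev_ge) auto
        ultimately show ?thesis using g by blast
      qed
      show "(\<Inter>n. A n) = {\<omega>\<in>space M. Y \<alpha> \<omega> \<le> sU \<alpha>}"
      proof (intro set_eqI iffI)
        fix \<omega> assume w: "\<omega> \<in> (\<Inter>n. A n)"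
        then have ws: "\<omega> \<in> space M" unfolding A_def by auto
        have "Y \<alpha> \<omega> \<le> supp_fun U u \<alpha>"
        proof (rule supp_left[OF U u a0])
          fix \<beta> assume b: "0 < \<beta>" "\<beta> < \<alpha>"
          obtain n where n: "\<beta> \<le> bseq \<alpha> n" using bp(4)[OF b] by blast
          have "Y \<alpha> \<omega> \<le> sU (bseq \<alpha> n)" using w unfolding A_def by auto
          also have "\<dots> \<le> sU \<beta>" using Umono[of "bseq \<alpha> n" \<beta>] n b bs[of n] by auto
          finally show "Y \<alpha> \<omega> \<le> supp_fun U u \<beta>" by (simp add: sU_def)
        qed
        then show "\<omega> \<in> {\<omega>\<in>space M. Y \<alpha> \<omega> \<le> sU \<alpha>}" using ws by (auto simp: sU_def)
      next
        fix \<omega> assume w: "\<omega> \<in> {\<omega>\<in>space M. Y \<alpha> \<omega> \<le> sU \<alpha>}"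
        have "sU \<alpha> \<le> sU (bseq \<alpha> n)" for n
          using Umono[of \<alpha> "bseq \<alpha> n"] bp(1,2)[of n] a0 by auto
        then show "\<omega> \<in> (\<Inter>n. A n)" using w unfolding A_def by (auto intro: order.trans)
      qed
    qed
    show ?thesis using 1 2 by (simp add: Med_def Y_def sU_def)
  next
    case True
    define t where "t n = 1 / (real n + 1)" for n :: nat
    have tp: "0 < t n" "t n \<le> 1" "m \<le> n \<Longrightarrow> t n \<le> t m" "0 < \<beta> \<Longrightarrow> \<exists>n. t n \<le> \<beta>" for n m \<beta>
      unfolding t_def using tseq_props by auto
    have ts: "t n \<in> {0..1}" for n using tp(1,2)[of n] by auto
    have 1: "1/2 \<le> prob {\<omega>\<in>space M. sU 0 \<le> Y 0 \<omega>}"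
    proof (rule dec_half_gen)
      define A where "A n = {\<omega>\<in>space M. sU (t n) \<le> Y 0 \<omega>}" for n
      show "A n \<in> events" for n unfolding A_def Y_def by (rule ev_le) simp
      show "decseq A" unfolding decseq_def A_def
      proof (intro allI impI subsetI)
        fix m n \<omega> assume mn: "m \<le> n" and w: "\<omega> \<in> {\<omega>\<in>space M. sU (t n) \<le> Y 0 \<omega>}"
        then have "sU (t m) \<le> sU (t n)" using Umono tp(1,2,3) by (auto simp: less_imp_le)
        then show "\<omega> \<in> {\<omega>\<in>space M. sU (t m) \<le> Y 0 \<omega>}" using w by auto
      qed
      show "\<exists>B\<in>events. B \<subseteq> A n \<and> 1/2 \<le> prob B" for n
      proof -
        obtain \<gamma> where g: "0 < \<gamma>" "\<gamma> < t n" "1/2 \<le> prob {\<omega>\<in>space M. sU \<gamma> \<le> Y \<gamma> \<omega>}"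
          using goodD[of 0 "t n"] tp(1,2)[of n] by auto
        have "{\<omega>\<in>space M. sU \<gamma> \<le> Y \<gamma> \<omega>} \<subseteq> A n"
        proof
          fix \<omega> assume w: "\<omega> \<in> {\<omega>\<in>space M. sU \<gamma> \<le> Y \<gamma> \<omega>}"
          have "sU (t n) \<le> sU \<gamma>" using Umono[of "t n" \<gamma>] g tp(2)[of n] by auto
          moreover have "Y \<gamma> \<omega> \<le> Y 0 \<omega>" using Ymono[of \<gamma> 0 \<omega>] g tp(2)[of n] w by auto
          ultimately show "\<omega> \<in> A n" using w unfolding A_def by auto
        qed
        moreover have "{\<omega>\<in>space M. sU \<gamma> \<le> Y \<gamma> \<omega>} \<in> events"
          unfolding Y_def using g tp(2)[of n] by (intro ev_le) auto
        ultimately show ?thesis using g by blast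
      qed
      show "(\<Inter>n. A n) = {\<omega>\<in>space M. sU 0 \<le> Y 0 \<omega>}"
      proof (intro set_eqI iffI)
        fix \<omega> assume w: "\<omega> \<in> (\<Inter>n. A n)"
        then have ws: "\<omega> \<in> space M" unfolding A_def by auto
        have "sU 0 \<le> Y 0 \<omega>"
        proof (rule ccontr)
          assume "\<not> sU 0 \<le> Y 0 \<omega>"
          then obtain \<beta> where b: "\<beta> \<in> {0<..1}" "Y 0 \<omega> < sU \<beta>"
            using supp_zero[OF U u, of "Y 0 \<omega>"] by (auto simp: sU_def)
          obtain n where n: "t n \<le> \<beta>" using tp(4) b by auto
          have "sU \<beta> \<le> sU (t n)" using Umono[of \<beta> "t n"] n tp(1)[of n] b by auto
          moreover have "sU (t n) \<le> Y 0 \<omega>" using w unfolding A_def by auto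
          ultimately show False using b by simp
        qed
        then show "\<omega> \<in> {\<omega>\<in>space M. sU 0 \<le> Y 0 \<omega>}" using ws by auto
      next
        fix \<omega> assume w: "\<omega> \<in> {\<omega>\<in>space M. sU 0 \<le> Y 0 \<omega>}"
        have "sU (t n) \<le> sU 0" for n using Umono[of "t n" 0] tp(1,2)[of n] by auto
        then show "\<omega> \<in> (\<Inter>n. A n)" using w unfolding A_def by (auto intro: order.trans)
      qed
    qed
    have 2: "1/2 \<le> prob {\<omega>\<in>space M. Y 0 \<omega> \<le> sU 0}"
    proof (rule dec_half_gen)
      define A where "A n = {\<omega>\<in>space M. Y (t n) \<omega> \<le> sU 0}" for n
      show "A n \<in> events" for n unfolding A_def Y_def by (rule ev_ge[OF ts])
      show "decseq A" unfolding decseq_def A_def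
      proof (intro allI impI subsetI)
        fix m n \<omega> assume mn: "m \<le> n" and w: "\<omega> \<in> {\<omega>\<in>space M. Y (t n) \<omega> \<le> sU 0}"
        then have "Y (t m) \<omega> \<le> Y (t n) \<omega>" using Ymono tp(1,2,3) by (auto simp: less_imp_le)
        then show "\<omega> \<in> {\<omega>\<in>space M. Y (t m) \<omega> \<le> sU 0}" using w by auto
      qed
      show "\<exists>B\<in>events. B \<subseteq> A n \<and> 1/2 \<le> prob B" for n
      proof -
        obtain \<gamma> where g: "0 < \<gamma>" "\<gamma> < t n" "1/2 \<le> prob {\<omega>\<in>space M. Y \<gamma> \<omega> \<le> sU \<gamma>}"
          using goodD[of 0 "t n"] tp(1,2)[of n] by auto
        have "{\<omega>\<in>space M. Y \<gamma> \<omega> \<le> sU \<gamma>} \<subseteq> A n"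
        proof
          fix \<omega> assume w: "\<omega> \<in> {\<omega>\<in>space M. Y \<gamma> \<omega> \<le> sU \<gamma>}"
          have "sU \<gamma> \<le> sU 0" using Umono[of \<gamma> 0] g tp(2)[of n] by auto
          moreover have "Y (t n) \<omega> \<le> Y \<gamma> \<omega>" using Ymono[of "t n" \<gamma> \<omega>] g tp(2)[of n] w by auto
          ultimately show "\<omega> \<in> A n" using w unfolding A_def by auto
        qed
        moreover have "{\<omega>\<in>space M. Y \<gamma> \<omega> \<le> sU \<gamma>} \<in> events"
          unfolding Y_def using g tp(2)[of n] by (intro ev_ge) auto
        ultimately show ?thesis using g by blast
      qed
      show "(\<Inter>n. A n) = {\<omega>\<in>space M. Y 0 \<omega> \<le> sU 0}"
      proof (intro set_eqI iffI)
        fix \<omega> assume w: "\<omega> \<in> (\<Inter>n. A n)"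
        then have ws: "\<omega> \<in> space M" unfolding A_def by auto
        have "Y 0 \<omega> \<le> sU 0"
        proof (rule ccontr)
          assume "\<not> Y 0 \<omega> \<le> sU 0"
          then obtain \<beta> where b: "\<beta> \<in> {0<..1}" "sU 0 < Y \<beta> \<omega>"
            using supp_zero[OF XFc[OF ws] u, of "sU 0"] by (auto simp: Y_def)
          obtain n where n: "t n \<le> \<beta>" using tp(4) b by auto
          have "Y \<beta> \<omega> \<le> Y (t n) \<omega>" using Ymono[of \<beta> "t n" \<omega>] ws n tp(1)[of n] b by auto
          moreover have "Y (t n) \<omega> \<le> sU 0" using w unfolding A_def by auto
          ultimately show False using b by simp
        qed
        then show "\<omega> \<in> {\<omega>\<in>space M. Y 0 \<omega> \<le> sU 0}" using ws by auto
      next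
        fix \<omega> assume w: "\<omega> \<in> {\<omega>\<in>space M. Y 0 \<omega> \<le> sU 0}"
        have "Y (t n) \<omega> \<le> Y 0 \<omega>" for n using Ymono[of "t n" 0 \<omega>] tp(1,2)[of n] w by auto
        then show "\<omega> \<in> (\<Inter>n. A n)" using w unfolding A_def by (auto intro: order.trans)
      qed
    qed
    show ?thesis using 1 2 True by (simp add: Med_def Y_def sU_def)
  qed
qed

end


context frv
begin

lemma G_le_med:
  assumes U: "U \<in> Fc" and V: "V \<in> Fc" and u: "u \<in> {-1,1}"
    and med: "\<And>\<alpha>. \<alpha> \<in> {0<..1} \<Longrightarrow> supp_fun U u \<alpha> \<in> Med M (\<lambda>\<omega>. supp_fun (X \<omega>) u \<alpha>)"
  shows "G U u \<alpha> \<le> G V u \<alpha>"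
proof (cases "\<alpha> \<in> {0<..1}")
  case True
  have "(\<integral>\<omega>. \<bar>supp_fun U u \<alpha> - supp_fun (X \<omega>) u \<alpha>\<bar> \<partial>M) \<le> (\<integral>\<omega>. \<bar>supp_fun V u \<alpha> - supp_fun (X \<omega>) u \<alpha>\<bar> \<partial>M)"
    by (rule med_opt[OF Yint[OF u] med[OF True]]) (use True in auto)
  then show ?thesis using G_in[OF U u True] G_in[OF V u True] by (simp add: ennreal_leI)
next
  case False
  then show ?thesis by (simp add: G_out)
qed

lemma Meds_sub: "U \<in> Meds M X \<Longrightarrow> U \<in> Med1 M X"
proof -
  assume "U \<in> Meds M X"
  then have U: "U \<in> Fc" and med: "\<And>u \<alpha>. u \<in> {-1,1} \<Longrightarrow> \<alpha> \<in> {0..1} \<Longrightarrow> supp_fun U u \<alpha> \<in> Med M (\<lambda>\<omega>. supp_fun (X \<omega>) u \<alpha>)"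
    by (auto simp: Meds_def)
  show "U \<in> Med1 M X" unfolding Med1_def
  proof (intro CollectI conjI U ballI)
    fix V assume V: "V \<in> Fc"
    have le: "(\<integral>\<^sup>+\<alpha>. G U u \<alpha> \<partial>lborel) \<le> (\<integral>\<^sup>+\<alpha>. G V u \<alpha> \<partial>lborel)" if u: "u \<in> {-1,1}" for u
      by (intro nn_integral_mono G_le_med[OF U V u] med u) auto
    show "(\<integral>\<^sup>+\<omega>. ennreal (rho1 U (X \<omega>)) \<partial>M) \<le> (\<integral>\<^sup>+\<omega>. ennreal (rho1 V (X \<omega>)) \<partial>M)"
      unfolding E_decomp[OF U] E_decomp[OF V]
      by (intro add_mono mult_left_mono le) auto
  qed
qed

lemma GW_fin:
  assumes u: "u \<in> {-1,1}"
  shows "(\<integral>\<^sup>+\<alpha>. G W u \<alpha> \<partial>lborel) < \<infinity>"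
proof -
  define K where "K = (\<integral>\<^sup>+\<omega>. ennreal (norm0 (X \<omega>)) \<partial>M)"
  have bnd: "G W u \<alpha> \<le> K * indicator {0<..1} \<alpha>" for \<alpha>
  proof (cases "\<alpha> \<in> {0<..1}")
    case True
    then have a: "\<alpha> \<in> {0..1}" by auto
    have "(\<integral>\<omega>. \<bar>supp_fun W u \<alpha> - supp_fun (X \<omega>) u \<alpha>\<bar> \<partial>M) \<le> (\<integral>\<omega>. \<bar>0 - supp_fun (X \<omega>) u \<alpha>\<bar> \<partial>M)"
      using med_opt[OF Yint[OF u a] g_med[OF a], of 0] W_supp[OF u True] by simp
    then have "G W u \<alpha> \<le> ennreal (\<integral>\<omega>. \<bar>0 - supp_fun (X \<omega>) u \<alpha>\<bar> \<partial>M)"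
      using G_in[OF W_Fc u True] by (simp add: ennreal_leI)
    also have "\<dots> = (\<integral>\<^sup>+\<omega>. ennreal \<bar>0 - supp_fun (X \<omega>) u \<alpha>\<bar> \<partial>M)"
      by (rule nn_integral_eq_integral[symmetric]) (use Yint[OF u a] in auto)
    also have "\<dots> \<le> K" unfolding K_def
      using supp_bound[OF XFc u a] by (intro nn_integral_mono ennreal_leI) auto
    finally show ?thesis using True by simp
  next
    case False
    then show ?thesis by (simp add: G_out)
  qed
  have "(\<integral>\<^sup>+\<alpha>. G W u \<alpha> \<partial>lborel) \<le> (\<integral>\<^sup>+\<alpha>. K * indicator {0<..1::real} \<alpha> \<partial>lborel)"
    by (rule nn_integral_mono) (rule bnd)
  also have "\<dots> = K * emeasure lborel {0<..1::real}" by (rule nn_integral_cmult_indicator) simp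
  also have "\<dots> = K" by simp
  also have "\<dots> < \<infinity>" using fin by (simp add: K_def)
  finally show ?thesis .
qed

lemma Med1_sub: "U \<in> Med1 M X \<Longrightarrow> U \<in> Meds M X"
proof -
  assume "U \<in> Med1 M X"
  then have U: "U \<in> Fc" and opt: "(\<integral>\<^sup>+\<omega>. ennreal (rho1 U (X \<omega>)) \<partial>M) \<le> (\<integral>\<^sup>+\<omega>. ennreal (rho1 W (X \<omega>)) \<partial>M)"
    using W_Fc by (auto simp: Med1_def)
  define a where "a u = (\<integral>\<^sup>+\<alpha>. G U u \<alpha> \<partial>lborel)" for u
  define b where "b u = (\<integral>\<^sup>+\<alpha>. G W u \<alpha> \<partial>lborel)" for u
  have medW: "\<And>\<alpha>. \<alpha> \<in> {0<..1} \<Longrightarrow> supp_fun W u \<alpha> \<in> Med M (\<lambda>\<omega>. supp_fun (X \<omega>) u \<alpha>)" if u: "u \<in> {-1,1}" for u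
    using W_supp[OF u] g_med by auto
  have GWU: "G W u \<alpha> \<le> G U u \<alpha>" if u: "u \<in> {-1,1}" for u \<alpha>
    by (rule G_le_med[OF W_Fc U u medW[OF u]])
  have ba: "b u \<le> a u" if u: "u \<in> {-1,1}" for u
    unfolding a_def b_def by (intro nn_integral_mono GWU u)
  have bfin: "b u < \<infinity>" if u: "u \<in> {-1,1}" for u unfolding b_def by (rule GW_fin[OF u])
  have "ennreal (1/2) * (a (-1) + a 1) \<le> ennreal (1/2) * (b (-1) + b 1)"
    using opt unfolding E_decomp[OF U] E_decomp[OF W_Fc] a_def b_def by (simp add: distrib_left)
  then have sum: "a (-1) + a 1 \<le> b (-1) + b 1"
    by (subst (asm) ennreal_mult_le_mult_iff) auto
  have sfin: "b (-1) + b 1 < \<infinity>" using bfin by simp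
  have x1: "a (-1) \<le> a (-1) + a 1" by simp
  have x2: "a 1 \<le> a (-1) + a 1" by simp
  have afin: "a (-1) < \<infinity>" "a 1 < \<infinity>"
    using le_less_trans[OF order.trans[OF x1 sum] sfin] le_less_trans[OF order.trans[OF x2 sum] sfin] by auto
  have "b (-1) + b 1 \<le> b (-1) + a 1" by (rule add_left_mono[OF ba]) simp
  then have "a (-1) + a 1 \<le> b (-1) + a 1" by (rule order.trans[OF sum])
  then have e1: "a (-1) \<le> b (-1)" using afin(2) by (auto simp: add.commute[of _ "a 1"] ennreal_add_left_cancel_le)
  have "b (-1) + b 1 \<le> a (-1) + b 1" by (rule add_right_mono[OF ba]) simp
  then have "a (-1) + a 1 \<le> a (-1) + b 1" by (rule order.trans[OF sum])
  then have e2: "a 1 \<le> b 1" using afin(1) by (auto simp: ennreal_add_left_cancel_le)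
  have aeq: "a u = b u" if u: "u \<in> {-1,1}" for u using e1 e2 ba[OF u] u by auto
  have good: "AE \<alpha> in lborel. \<alpha> \<in> {0<..1} \<longrightarrow> supp_fun U u \<alpha> \<in> Med M (\<lambda>\<omega>. supp_fun (X \<omega>) u \<alpha>)"
    if u: "u \<in> {-1,1}" for u
  proof -
    have mU: "G U u \<in> borel_measurable lborel" by (rule G_meas[OF U u])
    have mW: "G W u \<in> borel_measurable lborel" by (rule G_meas[OF W_Fc u])
    have "(\<integral>\<^sup>+\<alpha>. G U u \<alpha> - G W u \<alpha> \<partial>lborel) = a u - b u"
      unfolding a_def b_def using bfin[OF u] GWU[OF u] by (intro nn_integral_diff mU mW) (auto simp: b_def)
    also have "\<dots> = 0" using aeq[OF u] bfin[OF u] by (simp add: diff_eq_0_iff_ennreal)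
    finally have "AE \<alpha> in lborel. G U u \<alpha> - G W u \<alpha> = 0"
      by (subst (asm) nn_integral_0_iff_AE) (use mU mW in auto)
    then show ?thesis
    proof (rule AE_mp, intro AE_I2 impI)
      fix \<alpha> assume h: "G U u \<alpha> - G W u \<alpha> = 0" and a: "\<alpha> \<in> {0<..1}"
      have a2: "\<alpha> \<in> {0..1}" using a by auto
      have "G U u \<alpha> \<le> G W u \<alpha>" using h by (rule ennreal_minus_eq_0)
      then have "(\<integral>\<omega>. \<bar>supp_fun U u \<alpha> - supp_fun (X \<omega>) u \<alpha>\<bar> \<partial>M) \<le> (\<integral>\<omega>. \<bar>supp_fun W u \<alpha> - supp_fun (X \<omega>) u \<alpha>\<bar> \<partial>M)"
        unfolding G_in[OF U u a] G_in[OF W_Fc u a] by (simp add: ennreal_le_iff Bochner_Integration.integral_nonneg)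
      moreover have "(\<integral>\<omega>. \<bar>supp_fun W u \<alpha> - supp_fun (X \<omega>) u \<alpha>\<bar> \<partial>M) \<le> (\<integral>\<omega>. \<bar>d - supp_fun (X \<omega>) u \<alpha>\<bar> \<partial>M)" for d
        by (rule med_opt[OF Yint[OF u a2] medW[OF u a]])
      ultimately show "supp_fun U u \<alpha> \<in> Med M (\<lambda>\<omega>. supp_fun (X \<omega>) u \<alpha>)"
        by (intro opt_med[OF Yint[OF u a2]]) (meson order.trans)
    qed
  qed
  show "U \<in> Meds M X" unfolding Meds_def
    using med_closure[OF U _ good] U by auto
qed

lemma main: "Med1 M X = Meds M X"
  using Med1_sub Meds_sub by blast

end

theorem theorem4p2:
  fixes M :: "'a measure" and X :: "'a \<Rightarrow> real \<Rightarrow> real"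
  assumes "prob_space M"
    and "fuzzy_random_variable M X"
    and "(\<integral>\<^sup>+\<omega>. ennreal (norm0 (X \<omega>)) \<partial>M) < \<infinity>"
  shows "Med1 M X = Meds M X"
proof -
  interpret frv M X
    using assms by (simp add: frv_def frv_axioms_def)
  show ?thesis by (rule main)
qed

end
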